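(* For every $\phi\in\mathcal{H}_{+}$ one has $K\eta\phi=\eta\,\Pi B\Pi\phi$. In particular, the restriction of $\Pi B\Pi$ to $\mathcal{H}_{+}$ is unitarily equivalent to $K$.
   Context: Work on $L^2(\mathbb{R})$ (momentum representation). Let $(U\phi)(k)=\exp(-\mathrm{i}k^2)\phi(k)$. Let $\mathcal{F}^{*}$ denote the inverse $L^2$-Fourier transform, $(\mathcal{F}^{*}\phi)(x)=\frac{1}{\sqrt{2\pi}}\int_{-\infty}^{\infty}e^{\mathrm{i}kx}\phi(k)\,\mathrm{d}k$, and $\mathcal{F}$ the Fourier transform. Let $\Pi$ be the orthogonal projection with $(\Pi f)(x)=f(x)$ for $x>0$ and $0$ for $x<0$, and $\mathcal{H}_{+}:=\Pi(L^2(\mathbb{R}))$. Define $B:=U\mathcal{F}\Pi\mathcal{F}^{*}U^{*}-U^{*}\mathcal{F}\Pi\mathcal{F}^{*}U$ (i.e. $B=\widetilde{\Pi}_{-1}-\widetilde{\Pi}_{1}$ with $\widetilde{\Pi}_t=U_t^*\mathcal{F}\Pi\mathcal{F}^*U_t$, $U_t$ multiplication by $e^{-\mathrm{i}k^2t}$). Let $\eta:\mathcal{H}_{+}\to L^2(\mathbb{R}_{>0})$ be the unitary map $(\eta\phi)(k)=\phi(k)$ for $k>0$. Let $K:L^2(\mathbb{R}_{>0})\to L^2(\mathbb{R}_{>0})$ be the integral operator \[ (Kf)(k)=-\frac{1}{\pi}\int_0^\infty\frac{\sin(k^2-q^2)}{k-q}\,f(q)\,\mathrm{d}q . \] *)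

theory Defs
  imports "HOL-Analysis.Analysis"
begin

text \<open>Elements of L2(R) are represented by square-integrable Borel functions
  real => complex; equalities of L2 elements are stated almost everywhere.\<close>

definition square_integrable :: "(real \<Rightarrow> complex) \<Rightarrow> bool" where
  "square_integrable f \<longleftrightarrow> f \<in> borel_measurable lborel \<and>
     integrable lborel (\<lambda>x. (norm (f x))^2)"

definition trunc_fourier :: "real \<Rightarrow> (real \<Rightarrow> complex) \<Rightarrow> real \<Rightarrow> real \<Rightarrow> complex" where
  "trunc_fourier s f R k =
     complex_of_real (1 / sqrt (2 * pi)) *
       set_lebesgue_integral lborel {-R..R} (\<lambda>x. exp (complex_of_real (s * k * x) * \<i>) * f x)"

definition fourier_rel :: "real \<Rightarrow> (real \<Rightarrow> complex) \<Rightarrow> (real \<Rightarrow> complex) \<Rightarrow> bool" where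
  "fourier_rel s f g \<longleftrightarrow> square_integrable g \<and>
     ((\<lambda>R. \<integral>\<^sup>+ k. ennreal ((norm (trunc_fourier s f R k - g k))^2) \<partial>lborel) \<longlongrightarrow> 0) at_top"

definition FT :: "(real \<Rightarrow> complex) \<Rightarrow> real \<Rightarrow> complex" where
  "FT f = (SOME g. fourier_rel (-1) f g)"

definition iFT :: "(real \<Rightarrow> complex) \<Rightarrow> real \<Rightarrow> complex" where
  "iFT f = (SOME g. fourier_rel 1 f g)"

text \<open>U_t: multiplication by exp(-i k^2 t). U = U_1, U* = U_{-1}.\<close>
definition Ut :: "real \<Rightarrow> (real \<Rightarrow> complex) \<Rightarrow> real \<Rightarrow> complex" where
  "Ut t \<phi> k = exp (- \<i> * complex_of_real (k^2 * t)) * \<phi> k"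

definition Proj :: "(real \<Rightarrow> complex) \<Rightarrow> real \<Rightarrow> complex" where
  "Proj f x = (if x > 0 then f x else 0)"

definition Pitilde :: "real \<Rightarrow> (real \<Rightarrow> complex) \<Rightarrow> real \<Rightarrow> complex" where
  "Pitilde t \<phi> = Ut (-t) (FT (Proj (iFT (Ut t \<phi>))))"

text \<open>B = Pi~_{-1} - Pi~_1 = U F Pi F^* U^* - U^* F Pi F^* U.\<close>
definition Bop :: "(real \<Rightarrow> complex) \<Rightarrow> real \<Rightarrow> complex" where
  "Bop \<phi> k = Pitilde (-1) \<phi> k - Pitilde 1 \<phi> k"

text \<open>eta: restriction to k > 0 (functions on R_{>0} represented by functions
  vanishing on k <= 0).\<close>
definition eta :: "(real \<Rightarrow> complex) \<Rightarrow> real \<Rightarrow> complex" where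
  "eta \<phi> k = (if k > 0 then \<phi> k else 0)"

text \<open>(K f)(k) = -(1/pi) * integral_0^infty sin(k^2 - q^2)/(k - q) f(q) dq,
  for k > 0 (the integral converges absolutely for f in L2).\<close>
definition Kop :: "(real \<Rightarrow> complex) \<Rightarrow> real \<Rightarrow> complex" where
  "Kop f k = (if k > 0 then
      - complex_of_real (1 / pi) *
        set_lebesgue_integral lborel {0<..}
          (\<lambda>q. complex_of_real (sin (k^2 - q^2) / (k - q)) * f q)
     else 0)"

end

theory Submission
  imports Defs "HOL-Probability.Sinc_Integral"
begin

definition sqn :: "(real \<Rightarrow> complex) \<Rightarrow> ennreal" where
  "sqn f = (\<integral>\<^sup>+x. ennreal ((cmod (f x))^2) \<partial>lborel)"

lemma si_meas: "square_integrable f \<Longrightarrow> f \<in> borel_measurable lborel"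
  by (simp add: square_integrable_def)

lemma si_int: "square_integrable f \<Longrightarrow> integrable lborel (\<lambda>x. (cmod (f x))^2)"
  by (simp add: square_integrable_def)

lemma si_iff: "square_integrable f \<longleftrightarrow> f \<in> borel_measurable lborel \<and> sqn f < \<infinity>"
  unfolding square_integrable_def sqn_def
  by (auto simp: integrable_iff_bounded)

lemma si_mult:
  assumes "square_integrable f" "square_integrable g"
  shows "integrable lborel (\<lambda>x. f x * g x)"
proof (rule Bochner_Integration.integrable_bound)
  show "integrable lborel (\<lambda>x. (cmod (f x))^2 + (cmod (g x))^2)"
    using assms by (intro Bochner_Integration.integrable_add si_int)
  show "(\<lambda>x. f x * g x) \<in> borel_measurable lborel"
    using assms[THEN si_meas] by measurable
  show "AE x in lborel. norm (f x * g x) \<le> norm ((cmod (f x))^2 + (cmod (g x))^2)"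
  proof (intro AE_I2)
    fix x
    have "2 * (cmod (f x) * cmod (g x)) \<le> (cmod (f x))^2 + (cmod (g x))^2"
      using sum_squares_bound[of "cmod (f x)" "cmod (g x)"] by simp
    moreover have "0 \<le> cmod (f x) * cmod (g x)" by simp
    ultimately have "cmod (f x) * cmod (g x) \<le> (cmod (f x))^2 + (cmod (g x))^2" by linarith
    then show "norm (f x * g x) \<le> norm ((cmod (f x))^2 + (cmod (g x))^2)"
      by (simp add: norm_mult)
  qed
qed

lemma si_normmult:
  assumes "square_integrable f" "square_integrable g"
  shows "integrable lborel (\<lambda>x. cmod (f x) * cmod (g x))"
  using integrable_norm[OF si_mult[OF assms]] by (simp add: norm_mult)

lemma si_add:
  assumes "square_integrable f" "square_integrable g"
  shows "square_integrable (\<lambda>x. f x + g x)"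
  unfolding square_integrable_def
proof
  show "(\<lambda>x. f x + g x) \<in> borel_measurable lborel"
    using assms[THEN si_meas] by measurable
  show "integrable lborel (\<lambda>x. (cmod (f x + g x))^2)"
  proof (rule Bochner_Integration.integrable_bound)
    show "integrable lborel (\<lambda>x. 2 * (cmod (f x))^2 + 2 * (cmod (g x))^2)"
      using assms by (auto intro!: Bochner_Integration.integrable_add si_int)
    show "(\<lambda>x. (cmod (f x + g x))^2) \<in> borel_measurable lborel"
      using assms[THEN si_meas] by measurable
    show "AE x in lborel. norm ((cmod (f x + g x))^2) \<le> norm (2 * (cmod (f x))^2 + 2 * (cmod (g x))^2)"
    proof (intro AE_I2)
      fix x
      have a: "cmod (f x + g x) \<le> cmod (f x) + cmod (g x)" by (rule norm_triangle_ineq)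
      have "(cmod (f x + g x))^2 \<le> (cmod (f x) + cmod (g x))^2"
        using a by (intro power_mono) auto
      also have "\<dots> \<le> 2 * (cmod (f x))^2 + 2 * (cmod (g x))^2"
        using sum_squares_bound[of "cmod (f x)" "cmod (g x)"] by (simp add: power2_sum)
      finally show "norm ((cmod (f x + g x))^2) \<le> norm (2 * (cmod (f x))^2 + 2 * (cmod (g x))^2)"
        by simp
    qed
  qed
qed

lemma si_cmult:
  assumes "square_integrable f"
  shows "square_integrable (\<lambda>x. c * f x)"
  using assms unfolding square_integrable_def
  by (auto simp: norm_mult power_mult_distrib intro!: integrable_mult_right)

lemma si_cnj:
  assumes "square_integrable f"
  shows "square_integrable (\<lambda>x. cnj (f x))"
  using assms unfolding square_integrable_def
  by (auto intro!: borel_measurable_continuous_on[where f=cnj] continuous_intros)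

lemma si_uminus:
  assumes "square_integrable f"
  shows "square_integrable (\<lambda>x. - f x)"
  using si_cmult[OF assms, of "-1"] by simp

lemma si_diff:
  assumes "square_integrable f" "square_integrable g"
  shows "square_integrable (\<lambda>x. f x - g x)"
  using si_add[OF assms(1) si_uminus[OF assms(2)]] by simp

lemma si_sum:
  assumes "finite X" "\<And>y. y \<in> X \<Longrightarrow> square_integrable (f y)"
  shows "square_integrable (\<lambda>x. \<Sum>y\<in>X. f y x)"
  using assms
proof (induction X rule: finite_induct)
  case empty
  then show ?case by (simp add: square_integrable_def)
next
  case (insert a F)
  then show ?case by (simp add: si_add)
qed

lemma si_bdd:
  assumes "g \<in> borel_measurable lborel" "\<And>x. cmod (g x) \<le> C" "\<And>x. g x \<noteq> 0 \<Longrightarrow> x \<in> {a..b}"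
  shows "square_integrable g"
  unfolding square_integrable_def
proof
  show "g \<in> borel_measurable lborel" by fact
  show "integrable lborel (\<lambda>x. (cmod (g x))^2)"
  proof (rule Bochner_Integration.integrable_bound)
    show "integrable lborel (\<lambda>x. C^2 * indicator {a..b} x)"
      by (rule borel_integrable_atLeastAtMost) auto
    show "(\<lambda>x. (cmod (g x))^2) \<in> borel_measurable lborel"
      using assms(1) by measurable
    show "AE x in lborel. norm ((cmod (g x))^2) \<le> norm (C^2 * indicator {a..b} x)"
    proof (intro AE_I2)
      fix x
      have C: "0 \<le> C" using assms(2)[of x] norm_ge_zero order_trans by blast
      show "norm ((cmod (g x))^2) \<le> norm (C^2 * indicator {a..b} x)"
      proof (cases "g x = 0")
        case True then show ?thesis by simp
      next
        case False
        then have "x \<in> {a..b}" using assms(3) by blast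
        then show ?thesis using assms(2)[of x] C by (simp add: power_mono)
      qed
    qed
  qed
qed

lemma si_integrable_Icc:
  assumes "square_integrable f"
  shows "integrable lborel (\<lambda>x. indicator {a..b} x * f x)"
proof -
  have "square_integrable (\<lambda>x. indicator {a..b} x :: complex)"
    by (rule si_bdd[where C=1 and a=a and b=b]) (auto simp: indicator_def)
  from si_mult[OF this assms] show ?thesis .
qed

lemma has_vd_cexp_lin:
  "((\<lambda>k::real. exp (\<i> * complex_of_real (\<alpha> * k))) has_vector_derivative
      (\<i> * complex_of_real \<alpha> * exp (\<i> * complex_of_real (\<alpha> * k)))) (at k within S)"
  by (auto intro!: derivative_eq_intros simp: Re_exp Im_exp has_vector_derivative_complex_iff)


lemma set_int_cexp:
  assumes ab: "a \<le> b"
  shows "(LINT k:{a..b}|lborel. exp (\<i> * complex_of_real (\<alpha> * k))) =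
    (if \<alpha> = 0 then complex_of_real (b - a)
     else (exp (\<i> * complex_of_real (\<alpha> * b)) - exp (\<i> * complex_of_real (\<alpha> * a))) / (\<i> * complex_of_real \<alpha>))"
proof -
  have cont: "continuous_on {a..b} (\<lambda>k::real. exp (\<i> * complex_of_real (\<alpha> * k)))"
    by (intro continuous_intros)
  have si: "set_integrable lborel {a..b} (\<lambda>k::real. exp (\<i> * complex_of_real (\<alpha> * k)))"
    by (rule borel_integrable_atLeastAtMost'[OF cont])
  show ?thesis
  proof (cases "\<alpha> = 0")
    case True
    then show ?thesis using ab by (simp add: set_integral_const scaleR_conv_of_real)
  next
    case False
    have si2: "set_integrable lborel {a..b} (\<lambda>k::real. \<i> * complex_of_real \<alpha> * exp (\<i> * complex_of_real (\<alpha> * k)))"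
      by (rule borel_integrable_atLeastAtMost') (intro continuous_intros)
    have "((\<lambda>k. \<i> * complex_of_real \<alpha> * exp (\<i> * complex_of_real (\<alpha> * k))) has_integral
        (exp (\<i> * complex_of_real (\<alpha> * b)) - exp (\<i> * complex_of_real (\<alpha> * a)))) {a..b}"
      by (rule fundamental_theorem_of_calculus[OF ab]) (intro ballI has_vd_cexp_lin)
    then have "integral {a..b} (\<lambda>k. \<i> * complex_of_real \<alpha> * exp (\<i> * complex_of_real (\<alpha> * k))) =
        exp (\<i> * complex_of_real (\<alpha> * b)) - exp (\<i> * complex_of_real (\<alpha> * a))"
      by (rule integral_unique)
    then have "(LINT k:{a..b}|lborel. \<i> * complex_of_real \<alpha> * exp (\<i> * complex_of_real (\<alpha> * k))) =
        exp (\<i> * complex_of_real (\<alpha> * b)) - exp (\<i> * complex_of_real (\<alpha> * a))"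
      using set_borel_integral_eq_integral(2)[OF si2] by simp
    then have "\<i> * complex_of_real \<alpha> * (LINT k:{a..b}|lborel. exp (\<i> * complex_of_real (\<alpha> * k))) =
        exp (\<i> * complex_of_real (\<alpha> * b)) - exp (\<i> * complex_of_real (\<alpha> * a))"
      by (simp add: set_integral_mult_right)
    then show ?thesis using False by (simp add: field_simps)
  qed
qed

lemma exp_sin_zero:
  assumes "sin t = 0"
  shows "exp (\<i> * complex_of_real t) - exp (\<i> * complex_of_real (- t)) = 0"
proof -
  have "exp (\<i> * complex_of_real t) = cis t" by (simp add: cis_conv_exp)
  moreover have "exp (\<i> * complex_of_real (-t)) = cis (-t)" by (simp add: cis_conv_exp)
  ultimately show ?thesis using assms by (simp add: complex_eq_iff)
qed

lemma int_exp_orth: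
  assumes L: "L > 0" and s: "sin (\<alpha> * L) = 0"
  shows "(\<integral>k. indicator {-L..L} k * exp (\<i> * complex_of_real (\<alpha> * k)) \<partial>lborel) =
    (if \<alpha> = 0 then complex_of_real (2 * L) else 0)"
proof -
  have "(\<integral>k. indicator {-L..L} k * exp (\<i> * complex_of_real (\<alpha> * k)) \<partial>lborel) =
      (LINT k:{-L..L}|lborel. exp (\<i> * complex_of_real (\<alpha> * k)))"
    unfolding set_lebesgue_integral_def by (intro Bochner_Integration.integral_cong) (auto simp: indicator_def)
  also have "\<dots> = (if \<alpha> = 0 then complex_of_real (2 * L) else 0)"
    using L exp_sin_zero[OF s] by (subst set_int_cexp) auto
  finally show ?thesis .
qed

lemma cexp_meas[measurable]: "(\<lambda>k::real. exp (\<i> * complex_of_real (x * k))) \<in> borel_measurable borel"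
  by (intro borel_measurable_continuous_onI continuous_intros)

lemma bessel:
  fixes f :: "real \<Rightarrow> complex" and L :: real and X :: "real set"
  assumes f: "square_integrable f" and L: "L > 0"
    and supp: "\<And>k. f k \<noteq> 0 \<Longrightarrow> k \<in> {-L..L}"
    and X: "finite X" and orth: "\<And>x y. x \<in> X \<Longrightarrow> y \<in> X \<Longrightarrow> x \<noteq> y \<Longrightarrow> sin ((x - y) * L) = 0"
  shows "(\<Sum>x\<in>X. (cmod (\<integral>k. f k * exp (\<i> * complex_of_real (x * k)) \<partial>lborel))^2)
      \<le> 2 * L * (\<integral>k. (cmod (f k))^2 \<partial>lborel)"
proof -
  define e where "e x k = (indicator {-L..L} k :: complex) * exp (- (\<i> * complex_of_real (x * k)))" for x k
  define c where "c x = (\<integral>k. f k * exp (\<i> * complex_of_real (x * k)) \<partial>lborel)" for x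
  have cnje: "cnj (e x k) = indicator {-L..L} k * exp (\<i> * complex_of_real (x * k))" for x k
    by (simp add: e_def exp_cnj indicator_def)
  have fce: "f k * cnj (e x k) = f k * exp (\<i> * complex_of_real (x * k))" for x k
    using supp[of k] by (cases "f k = 0") (auto simp: cnje indicator_def)
  have c_alt: "c x = (\<integral>k. f k * cnj (e x k) \<partial>lborel)" for x
    by (simp add: c_def fce)
  have e_si: "square_integrable (e x)" for x
  proof (rule si_bdd[where C=1 and a="-L" and b=L])
    show "e x \<in> borel_measurable lborel" unfolding e_def
      by (intro borel_measurable_times borel_measurable_continuous_onI continuous_intros) auto
    show "cmod (e x k) \<le> 1" for k
      by (simp add: e_def indicator_def norm_mult)
    show "e x k \<noteq> 0 \<Longrightarrow> k \<in> {-L..L}" for k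
      by (auto simp: e_def indicator_def split: if_splits)
  qed
  have ee: "(\<integral>k. e y k * cnj (e z k) \<partial>lborel) = (if y = z then complex_of_real (2 * L) else 0)"
    if "y \<in> X" "z \<in> X" for y z
  proof -
    have "(\<integral>k. e y k * cnj (e z k) \<partial>lborel) =
        (\<integral>k. indicator {-L..L} k * exp (\<i> * complex_of_real ((z - y) * k)) \<partial>lborel)"
      by (intro Bochner_Integration.integral_cong)
         (auto simp: e_def indicator_def exp_cnj mult_exp_exp algebra_simps)
    also have "\<dots> = (if z - y = 0 then complex_of_real (2 * L) else 0)"
    proof (rule int_exp_orth[OF L])
      show "sin ((z - y) * L) = 0"
        using orth[OF that(2,1)] by (cases "z = y") auto
    qed
    finally show ?thesis by auto
  qed
  define P where "P k = (\<Sum>y\<in>X. c y * e y k) / complex_of_real (2 * L)" for k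
  have P_si: "square_integrable P"
    unfolding P_def divide_inverse
    by (subst mult.commute, rule si_cmult, rule si_sum[OF X], rule si_cmult, rule e_si)
  define N where "N = (\<integral>k. (cmod (f k))^2 \<partial>lborel)"
  define S where "S = (\<Sum>x\<in>X. (cmod (c x))^2)"
  have cc: "c y * cnj (c y) = complex_of_real ((cmod (c y))^2)" for y
    by (rule complex_norm_square[symmetric])
  have cc': "z * cnj z = (complex_of_real (cmod z))^2" for z :: complex
    using complex_norm_square[of z] by simp
  have I1: "(\<integral>k. f k * cnj (f k) \<partial>lborel) = complex_of_real N"
    by (simp only: N_def integral_complex_of_real[symmetric] complex_norm_square)
  have I2: "(\<integral>k. f k * cnj (P k) \<partial>lborel) = complex_of_real (S / (2 * L))"
  proof -
    have "(\<integral>k. f k * cnj (P k) \<partial>lborel) =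
        (\<integral>k. (\<Sum>y\<in>X. cnj (c y) * (f k * cnj (e y k))) / complex_of_real (2 * L) \<partial>lborel)"
      by (simp add: P_def sum_distrib_left algebra_simps)
    also have "\<dots> = (\<Sum>y\<in>X. cnj (c y) * (\<integral>k. f k * cnj (e y k) \<partial>lborel)) / complex_of_real (2 * L)"
      using si_mult[OF f si_cnj[OF e_si]]
      by (simp add: integral_sum)
    also have "\<dots> = (\<Sum>y\<in>X. complex_of_real ((cmod (c y))^2)) / complex_of_real (2 * L)"
      by (simp add: c_alt[symmetric] cc' mult.commute)
    finally show ?thesis by (simp add: S_def)
  qed
  have I3: "(\<integral>k. P k * cnj (f k) \<partial>lborel) = complex_of_real (S / (2 * L))"
  proof -
    have "(\<integral>k. P k * cnj (f k) \<partial>lborel) = cnj (\<integral>k. f k * cnj (P k) \<partial>lborel)"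
      using Bochner_Integration.integral_cnj[of lborel "\<lambda>k. f k * cnj (P k)", symmetric]
      by (simp add: mult.commute)
    then show ?thesis using I2 by simp
  qed
  have I4: "(\<integral>k. P k * cnj (P k) \<partial>lborel) = complex_of_real (S / (2 * L))"
  proof -
    have "(\<integral>k. P k * cnj (P k) \<partial>lborel) =
        (\<integral>k. (\<Sum>z\<in>X. \<Sum>y\<in>X. c y * cnj (c z) * (e y k * cnj (e z k))) / complex_of_real (4 * L^2) \<partial>lborel)"
      by (simp add: P_def sum_distrib_left sum_distrib_right algebra_simps power2_eq_square)
    also have "\<dots> = (\<Sum>z\<in>X. \<Sum>y\<in>X. c y * cnj (c z) * (\<integral>k. e y k * cnj (e z k) \<partial>lborel)) / complex_of_real (4 * L^2)"
      using si_mult[OF e_si si_cnj[OF e_si]]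
      by (simp add: integral_sum integrable_sum)
    also have "\<dots> = (\<Sum>y\<in>X. c y * cnj (c y) * complex_of_real (2 * L)) / complex_of_real (4 * L^2)"
    proof -
      have "(\<Sum>y\<in>X. c y * cnj (c z) * (\<integral>k. e y k * cnj (e z k) \<partial>lborel)) = c z * cnj (c z) * complex_of_real (2 * L)"
        if z: "z \<in> X" for z
      proof -
        have "(\<Sum>y\<in>X. c y * cnj (c z) * (\<integral>k. e y k * cnj (e z k) \<partial>lborel)) =
            (\<Sum>y\<in>X. if y = z then c y * cnj (c z) * complex_of_real (2 * L) else 0)"
          by (intro sum.cong) (auto simp: ee z)
        also have "\<dots> = c z * cnj (c z) * complex_of_real (2 * L)"
          using X z by simp
        finally show ?thesis .
      qed
      then show ?thesis by (intro arg_cong2[where f="(/)"] sum.cong) auto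
    qed
    also have "\<dots> = complex_of_real (S / (2 * L))"
      using L by (simp add: cc S_def power2_eq_square field_simps sum_distrib_left)
    finally show ?thesis .
  qed
  have fP: "square_integrable (\<lambda>k. f k - P k)" by (rule si_diff[OF f P_si])
  have "complex_of_real (\<integral>k. (cmod (f k - P k))^2 \<partial>lborel) =
      (\<integral>k. (f k - P k) * cnj (f k - P k) \<partial>lborel)"
    by (simp only: integral_complex_of_real[symmetric] complex_norm_square)
  also have "\<dots> = (\<integral>k. f k * cnj (f k) - f k * cnj (P k) - (P k * cnj (f k) - P k * cnj (P k)) \<partial>lborel)"
    by (simp add: algebra_simps)
  also have "\<dots> = complex_of_real N - complex_of_real (S / (2 * L)) - (complex_of_real (S / (2 * L)) - complex_of_real (S / (2 * L)))"
    using si_mult[OF f si_cnj[OF f]] si_mult[OF f si_cnj[OF P_si]] si_mult[OF P_si si_cnj[OF f]]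
      si_mult[OF P_si si_cnj[OF P_si]]
    by (simp add: I1 I2 I3 I4 del: of_real_diff)
  finally have "complex_of_real (\<integral>k. (cmod (f k - P k))^2 \<partial>lborel) = complex_of_real (N - S / (2 * L))"
    by simp
  then have eq: "(\<integral>k. (cmod (f k - P k))^2 \<partial>lborel) = N - S / (2 * L)"
    by (simp only: of_real_eq_iff)
  have "0 \<le> (\<integral>k. (cmod (f k - P k))^2 \<partial>lborel)" by simp
  then have "S / (2 * L) \<le> N" using eq by simp
  then show ?thesis using L unfolding S_def N_def c_def by (simp add: field_simps)
qed

lemma ft_meas:
  assumes f: "f \<in> borel_measurable lborel"
  shows "(\<lambda>x. \<integral>k. f k * exp (\<i> * complex_of_real (x * k)) \<partial>lborel) \<in> borel_measurable lborel"
proof -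
  have [measurable]: "f \<in> borel_measurable borel" using f by simp
  have m: "(\<lambda>(x, k). f k * exp (\<i> * complex_of_real (x * k))) \<in> borel_measurable (lborel \<Otimes>\<^sub>M lborel)"
    by measurable
  show ?thesis
    by (rule lborel.borel_measurable_lebesgue_integral[OF m])
qed


lemma indicator_split_ennreal:
  assumes h: "h > 0"
  shows "(indicator {-(real n * h)..<real n * h} x :: ennreal) =
    (\<Sum>j\<in>{-int n..<int n}. indicator {of_int j * h..<(of_int j + 1) * h} x)"
proof -
  have mem: "x \<in> {of_int j * h..<(of_int j + 1) * h} \<longleftrightarrow> j = \<lfloor>x / h\<rfloor>" for j
  proof -
    have "x \<in> {of_int j * h..<(of_int j + 1) * h} \<longleftrightarrow> of_int j \<le> x / h \<and> x / h < of_int j + 1"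
      using h by (auto simp: field_simps)
    also have "\<dots> \<longleftrightarrow> j = \<lfloor>x / h\<rfloor>" using floor_eq_iff[of "x / h" j] by auto
    finally show ?thesis .
  qed
  show ?thesis
  proof (cases "x \<in> {-(real n * h)..<real n * h}")
    case True
    then have "- real n \<le> x / h" "x / h < real n" using h by (auto simp: field_simps)
    then have j0: "\<lfloor>x / h\<rfloor> \<in> {-int n..<int n}"
      by (auto simp: le_floor_iff floor_less_iff)
    have "(\<Sum>j\<in>{-int n..<int n}. indicator {of_int j * h..<(of_int j + 1) * h} x :: ennreal) =
        (\<Sum>j\<in>{-int n..<int n}. if j = \<lfloor>x / h\<rfloor> then 1 else 0)"
      by (intro sum.cong) (auto simp: indicator_def mem simp del: atLeastLessThan_iff)
    also have "\<dots> = 1" using j0 by simp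
    finally show ?thesis using True by simp
  next
    case False
    have "x \<notin> {of_int j * h..<(of_int j + 1) * h}" if "j \<in> {-int n..<int n}" for j
    proof
      assume "x \<in> {of_int j * h..<(of_int j + 1) * h}"
      moreover have a: "- real n \<le> of_int j" "of_int j + 1 \<le> real n"
        using that by auto
      have "- real n * h \<le> of_int j * h" "(of_int j + 1) * h \<le> real n * h"
        using h a by (intro mult_right_mono; simp)+
      ultimately show False using False by auto
    qed
    then have "(\<Sum>j\<in>{-int n..<int n}. indicator {of_int j * h..<(of_int j + 1) * h} x :: ennreal) = 0"
      by (intro sum.neutral) (simp add: indicator_def del: atLeastLessThan_iff)
    then show ?thesis using False by simp
  qed
qed

lemma plancherel_ineq:
  fixes f :: "real \<Rightarrow> complex"
  assumes f: "square_integrable f" and L: "L > 0" and supp: "\<And>k. f k \<noteq> 0 \<Longrightarrow> k \<in> {-L..L}"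
  shows "(\<integral>\<^sup>+x. ennreal ((cmod (\<integral>k. f k * exp (\<i> * complex_of_real (x * k)) \<partial>lborel))^2) \<partial>lborel)
      \<le> ennreal (2 * pi * (\<integral>k. (cmod (f k))^2 \<partial>lborel))"
proof -
  define F where "F x = (cmod (\<integral>k. f k * exp (\<i> * complex_of_real (x * k)) \<partial>lborel))^2" for x
  define N2 where "N2 = (\<integral>k. (cmod (f k))^2 \<partial>lborel)"
  define h where "h = pi / L"
  have h: "h > 0" using L by (simp add: h_def)
  have hL: "h * L = pi" using L by (simp add: h_def)
  have N2: "N2 \<ge> 0" by (simp add: N2_def)
  have Fm[measurable]: "F \<in> borel_measurable borel"
  proof -
    have "F \<in> borel_measurable lborel" unfolding F_def
      using ft_meas[OF si_meas[OF f]] by measurable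
    then show ?thesis by simp
  qed
  have bes: "(\<Sum>j\<in>{-int n..<int n}. F (y + of_int j * h)) \<le> 2 * L * N2" for y n
  proof -
    let ?X = "(\<lambda>j. y + of_int j * h) ` {-int n..<int n}"
    have inj: "inj_on (\<lambda>j::int. y + of_int j * h) {-int n..<int n}"
      using h by (auto simp: inj_on_def)
    have "(\<Sum>j\<in>{-int n..<int n}. F (y + of_int j * h)) = (\<Sum>x\<in>?X. F x)"
      by (simp add: sum.reindex[OF inj])
    also have "\<dots> \<le> 2 * L * N2" unfolding F_def N2_def
    proof (rule bessel[OF f L supp])
      show "finite ?X" by simp
      fix x x' assume "x \<in> ?X" "x' \<in> ?X" "x \<noteq> x'"
      then obtain j j' where jj: "x = y + of_int j * h" "x' = y + of_int j' * h" by auto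
      have "(x - x') * L = of_int (j - j') * (h * L)" using jj by (simp add: algebra_simps)
      then have "(x - x') * L = of_int (j - j') * pi" using hL by simp
      then show "sin ((x - x') * L) = 0" by (simp add: sin_times_pi_eq_0)
    qed
    finally show ?thesis .
  qed
  have step: "(\<integral>\<^sup>+x. ennreal (F x) * indicator {-(real n * h)..<real n * h} x \<partial>lborel) \<le> ennreal (2 * pi * N2)" for n
  proof -
    have "(\<integral>\<^sup>+x. ennreal (F x) * indicator {-(real n * h)..<real n * h} x \<partial>lborel) =
        (\<integral>\<^sup>+x. (\<Sum>j\<in>{-int n..<int n}. ennreal (F x) * indicator {of_int j * h..<(of_int j + 1) * h} x) \<partial>lborel)"
      by (simp add: indicator_split_ennreal[OF h] sum_distrib_left)
    also have "\<dots> = (\<Sum>j\<in>{-int n..<int n}. \<integral>\<^sup>+x. ennreal (F x) * indicator {of_int j * h..<(of_int j + 1) * h} x \<partial>lborel)"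
      by (rule nn_integral_sum) simp
    also have "\<dots> = (\<Sum>j\<in>{-int n..<int n}. \<integral>\<^sup>+y. ennreal (F (y + of_int j * h)) * indicator {0..<h} y \<partial>lborel)"
    proof (intro sum.cong refl)
      fix j :: int
      have "(\<integral>\<^sup>+x. ennreal (F x) * indicator {of_int j * h..<(of_int j + 1) * h} x \<partial>lborel) =
          (\<integral>\<^sup>+x. ennreal (F (of_int j * h + 1 * x)) * indicator {of_int j * h..<(of_int j + 1) * h} (of_int j * h + 1 * x) \<partial>lborel)"
        using nn_integral_real_affine[where c=1 and t="of_int j * h" and f="\<lambda>x. ennreal (F x) * indicator {of_int j * h..<(of_int j + 1) * h} x"]
        by simp
      also have "\<dots> = (\<integral>\<^sup>+y. ennreal (F (y + of_int j * h)) * indicator {0..<h} y \<partial>lborel)"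
        by (intro nn_integral_cong) (auto simp: indicator_def algebra_simps)
      finally show "(\<integral>\<^sup>+x. ennreal (F x) * indicator {of_int j * h..<(of_int j + 1) * h} x \<partial>lborel) =
          (\<integral>\<^sup>+y. ennreal (F (y + of_int j * h)) * indicator {0..<h} y \<partial>lborel)" .
    qed
    also have "\<dots> = (\<integral>\<^sup>+y. (\<Sum>j\<in>{-int n..<int n}. ennreal (F (y + of_int j * h))) * indicator {0..<h} y \<partial>lborel)"
      by (subst nn_integral_sum[symmetric]) (auto simp: sum_distrib_right)
    also have "\<dots> \<le> (\<integral>\<^sup>+y. ennreal (2 * L * N2) * indicator {0..<h} y \<partial>lborel)"
    proof (intro nn_integral_mono mult_right_mono)
      fix y
      have "(\<Sum>j\<in>{-int n..<int n}. ennreal (F (y + of_int j * h))) = ennreal (\<Sum>j\<in>{-int n..<int n}. F (y + of_int j * h))"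
        by (rule sum_ennreal) (simp add: F_def)
      also have "\<dots> \<le> ennreal (2 * L * N2)" using bes by (intro ennreal_leI) auto
      finally show "(\<Sum>j\<in>{-int n..<int n}. ennreal (F (y + of_int j * h))) \<le> ennreal (2 * L * N2)" .
    qed simp
    also have "\<dots> = ennreal (2 * L * N2) * ennreal h"
      using h by (simp add: nn_integral_cmult_indicator)
    also have "\<dots> = ennreal (2 * pi * N2)"
      using h L N2 hL by (simp add: ennreal_mult[symmetric] algebra_simps)
    finally show ?thesis .
  qed
  have sup: "(SUP n. ennreal (F x) * indicator {-(real n * h)..<real n * h} x) = ennreal (F x)" for x
  proof (rule antisym)
    show "(SUP n. ennreal (F x) * indicator {-(real n * h)..<real n * h} x) \<le> ennreal (F x)"
      by (rule SUP_least) (auto simp: indicator_def)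
    obtain n :: nat where n: "\<bar>x\<bar> / h < real n" using reals_Archimedean2 by blast
    then have "x \<in> {-(real n * h)..<real n * h}" using h by (auto simp: field_simps abs_less_iff)
    then show "ennreal (F x) \<le> (SUP n. ennreal (F x) * indicator {-(real n * h)..<real n * h} x)"
      by (intro SUP_upper2[of n]) auto
  qed
  have inc: "incseq (\<lambda>n x. ennreal (F x) * indicator {-(real n * h)..<real n * h} x)"
  proof (intro monoI le_funI mult_left_mono)
    fix m n :: nat and x assume "m \<le> n"
    then have "{-(real m * h)..<real m * h} \<subseteq> {-(real n * h)..<real n * h}"
      using h by (auto intro: order_trans[OF _ mult_right_mono] order_less_le_trans[OF _ mult_right_mono])
    then show "(indicator {-(real m * h)..<real m * h} x :: ennreal) \<le> indicator {-(real n * h)..<real n * h} x"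
      by (auto simp: indicator_def)
  qed simp
  have "(\<integral>\<^sup>+x. ennreal (F x) \<partial>lborel) = (\<integral>\<^sup>+x. (SUP n. ennreal (F x) * indicator {-(real n * h)..<real n * h} x) \<partial>lborel)"
    by (simp add: sup)
  also have "\<dots> = (SUP n. \<integral>\<^sup>+x. ennreal (F x) * indicator {-(real n * h)..<real n * h} x \<partial>lborel)"
    by (rule nn_integral_monotone_convergence_SUP[OF inc]) simp
  also have "\<dots> \<le> ennreal (2 * pi * N2)"
    by (rule SUP_least) (rule step)
  finally show ?thesis unfolding F_def N2_def .
qed

lemma sq_tri_real: "(cmod (a + b))^2 \<le> 2 * (cmod a)^2 + 2 * (cmod b)^2"
proof -
  have a: "cmod (a + b) \<le> cmod a + cmod b" by (rule norm_triangle_ineq)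
  have "(cmod (a + b))^2 \<le> (cmod a + cmod b)^2"
    using a by (intro power_mono) auto
  also have "\<dots> \<le> 2 * (cmod a)^2 + 2 * (cmod b)^2"
    using sum_squares_bound[of "cmod a" "cmod b"] by (simp add: power2_sum)
  finally show ?thesis .
qed

lemma sq_tri_ennreal:
  "ennreal ((cmod (a + b))^2) \<le> 2 * ennreal ((cmod a)^2) + 2 * ennreal ((cmod b)^2)"
proof -
  have "ennreal ((cmod (a + b))^2) \<le> ennreal (2 * (cmod a)^2 + 2 * (cmod b)^2)"
    by (intro ennreal_leI sq_tri_real)
  also have "\<dots> = 2 * ennreal ((cmod a)^2) + 2 * ennreal ((cmod b)^2)"
    by (subst ennreal_plus) (auto simp: ennreal_mult)
  finally show ?thesis .
qed

lemma L2_complete: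
  fixes u :: "real \<Rightarrow> real \<Rightarrow> complex" and \<tau> :: "real \<Rightarrow> ennreal"
  assumes meas: "\<And>R. u R \<in> borel_measurable lborel"
    and cauchy: "\<And>R S. R0 \<le> R \<Longrightarrow> R \<le> S \<Longrightarrow> (\<integral>\<^sup>+k. ennreal ((cmod (u S k - u R k))^2) \<partial>lborel) \<le> \<tau> R"
    and tau: "(\<tau> \<longlongrightarrow> 0) at_top"
    and fin: "\<And>R. R0 \<le> R \<Longrightarrow> sqn (u R) < \<infinity>"
  shows "\<exists>g. square_integrable g \<and> ((\<lambda>R. \<integral>\<^sup>+k. ennreal ((cmod (u R k - g k))^2) \<partial>lborel) \<longlongrightarrow> 0) at_top"
proof -
  have [measurable]: "u R \<in> borel_measurable borel" for R using meas[of R] by simp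
  have ev: "\<exists>N. \<forall>R\<ge>N. \<tau> R < ennreal ((1/8)^n)" for n :: nat
  proof -
    have "ennreal ((1/8)^n) > 0" by simp
    with tau have "eventually (\<lambda>R. \<tau> R < ennreal ((1/8)^n)) at_top" by (rule order_tendstoD)
    then show ?thesis by (simp add: eventually_at_top_linorder)
  qed
  then obtain N where N: "\<And>n R. R \<ge> N n \<Longrightarrow> \<tau> R < ennreal ((1/8)^n)" by metis
  define r where "r n = \<bar>R0\<bar> + real n + (\<Sum>j\<le>n. \<bar>N j\<bar>)" for n
  have sumN: "\<bar>N n\<bar> \<le> (\<Sum>j\<le>n. \<bar>N j\<bar>)" for n
    by (rule member_le_sum) auto
  have sum0: "0 \<le> (\<Sum>j\<le>n. \<bar>N j\<bar>)" for n by (rule sum_nonneg) auto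
  have r_ge: "r n \<ge> N n" "r n \<ge> R0" "r n \<ge> real n" for n
    using sumN[of n] sum0[of n] by (auto simp: r_def)
  have r_suc: "r n \<le> r (Suc n)" for n by (simp add: r_def)
  have r_mono: "m \<le> n \<Longrightarrow> r m \<le> r n" for m n by (rule lift_Suc_mono_le[of r, OF r_suc])
  define d where "d n k = u (r (Suc n)) k - u (r n) k" for n k
  have [measurable]: "d n \<in> borel_measurable borel" for n unfolding d_def by measurable
  have dint: "(\<integral>\<^sup>+k. ennreal ((cmod (d n k))^2) \<partial>lborel) \<le> ennreal ((1/8)^n)" for n
    using order.trans[OF cauchy[OF r_ge(2) r_suc] less_imp_le[OF N[OF r_ge(1)]]]
    by (simp add: d_def)
  define w where "w k = (\<Sum>n. ennreal (4^n * (cmod (d n k))^2))" for k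
  have [measurable]: "w \<in> borel_measurable borel" unfolding w_def
    by (intro borel_measurable_suminf_order) measurable
  have "(\<integral>\<^sup>+k. w k \<partial>lborel) = (\<Sum>n. \<integral>\<^sup>+k. ennreal (4^n * (cmod (d n k))^2) \<partial>lborel)"
    unfolding w_def by (rule nn_integral_suminf) simp
  also have "\<dots> \<le> (\<Sum>n. ennreal ((1/2)^n))"
  proof (rule suminf_le)
    fix n
    have "(\<integral>\<^sup>+k. ennreal (4^n * (cmod (d n k))^2) \<partial>lborel) = ennreal (4^n) * (\<integral>\<^sup>+k. ennreal ((cmod (d n k))^2) \<partial>lborel)"
      by (simp add: ennreal_mult nn_integral_cmult)
    also have "\<dots> \<le> ennreal (4^n) * ennreal ((1/8)^n)"
      by (intro mult_left_mono dint) simp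
    also have "\<dots> = ennreal ((1/2)^n)"
      by (simp add: ennreal_mult[symmetric] power_mult_distrib[symmetric])
    finally show "(\<integral>\<^sup>+k. ennreal (4^n * (cmod (d n k))^2) \<partial>lborel) \<le> ennreal ((1/2)^n)" .
  qed (rule summableI, rule summableI)
  also have "\<dots> = ennreal (\<Sum>n. (1/2::real)^n)"
    by (rule suminf_ennreal2) (auto intro: summable_geometric)
  also have "(\<Sum>n. (1/2::real)^n) = 2"
    using suminf_geometric[of "1/2::real"] by simp
  finally have w2: "(\<integral>\<^sup>+k. w k \<partial>lborel) \<le> ennreal 2" .
  then have wfin: "(\<integral>\<^sup>+k. w k \<partial>lborel) \<noteq> top"
    by (auto simp: top_unique)
  have wAE: "AE k in lborel. w k \<noteq> \<infinity>"
    by (rule nn_integral_PInf_AE) (use wfin in \<open>auto simp: infinity_ennreal_def\<close>)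
  have conv: "AE k in lborel. convergent (\<lambda>n. u (r n) k)"
    using wAE
  proof (rule AE_mp, intro AE_I2 impI)
    fix k assume wk: "w k \<noteq> \<infinity>"
    then obtain C where C: "w k = ennreal C" "C \<ge> 0"
      by (metis ennreal_cases infinity_ennreal_def)
    have tm: "4^n * (cmod (d n k))^2 \<le> C" for n
    proof -
      have "ennreal (4^n * (cmod (d n k))^2) = (\<Sum>j\<in>{n}. ennreal (4^j * (cmod (d j k))^2))" by simp
      also have "\<dots> \<le> w k" unfolding w_def
        by (rule sum_le_suminf) (auto intro: summableI)
      finally have "ennreal (4^n * (cmod (d n k))^2) \<le> ennreal C" using C(1) by simp
      then show ?thesis using C(2) by simp
    qed
    have dbound: "cmod (d n k) \<le> sqrt C * (1/2)^n" for n
    proof -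
      have "(cmod (d n k))^2 \<le> C / 4^n" using tm[of n] by (simp add: field_simps)
      then have "sqrt ((cmod (d n k))^2) \<le> sqrt (C / 4^n)" by (rule real_sqrt_le_mono)
      also have "sqrt (C / 4^n) = sqrt C * (1/2)^n"
        by (simp add: real_sqrt_divide real_sqrt_power power_divide)
      finally show ?thesis by simp
    qed
    have "summable (\<lambda>n. norm (d n k))"
    proof (rule summable_comparison_test)
      show "\<exists>N. \<forall>n\<ge>N. norm (norm (d n k)) \<le> sqrt C * (1/2)^n" using dbound by auto
      show "summable (\<lambda>n. sqrt C * (1/2::real)^n)"
        by (intro summable_mult summable_geometric) simp
    qed
    then have sd: "summable (\<lambda>n. d n k)" by (rule summable_norm_cancel)
    have eq: "u (r n) k = u (r 0) k + (\<Sum>j<n. d j k)" for n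
      unfolding d_def using sum_lessThan_telescope[of "\<lambda>j. u (r j) k" n] by simp
    have "(\<lambda>n. u (r 0) k + (\<Sum>j<n. d j k)) \<longlonglongrightarrow> u (r 0) k + suminf (\<lambda>j. d j k)"
      by (intro tendsto_add tendsto_const summable_LIMSEQ sd)
    moreover have "(\<lambda>n. u (r n) k) = (\<lambda>n. u (r 0) k + (\<Sum>j<n. d j k))"
      by (rule ext) (rule eq)
    ultimately show "convergent (\<lambda>n. u (r n) k)"
      unfolding convergent_def by metis
  qed
  define g where "g k = lim (\<lambda>n. u (r n) k)" for k
  have gm[measurable]: "g \<in> borel_measurable borel" unfolding g_def by measurable
  have glim: "AE k in lborel. (\<lambda>n. u (r n) k) \<longlonglongrightarrow> g k"
    using conv by eventually_elim (simp add: g_def convergent_LIMSEQ_iff)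
  have bound: "(\<integral>\<^sup>+k. ennreal ((cmod (u R k - g k))^2) \<partial>lborel) \<le> \<tau> R" if R: "R0 \<le> R" for R
  proof -
    have "AE k in lborel. liminf (\<lambda>n. ennreal ((cmod (u R k - u (r n) k))^2)) = ennreal ((cmod (u R k - g k))^2)"
      using glim
    proof eventually_elim
      case (elim k)
      have "(\<lambda>n. ennreal ((cmod (u R k - u (r n) k))^2)) \<longlonglongrightarrow> ennreal ((cmod (u R k - g k))^2)"
        by (intro tendsto_ennrealI tendsto_intros elim)
      then show ?case by (rule lim_imp_Liminf[rotated]) simp
    qed
    then have "(\<integral>\<^sup>+k. ennreal ((cmod (u R k - g k))^2) \<partial>lborel) =
        (\<integral>\<^sup>+k. liminf (\<lambda>n. ennreal ((cmod (u R k - u (r n) k))^2)) \<partial>lborel)"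
      by (intro nn_integral_cong_AE) auto
    also have "\<dots> \<le> liminf (\<lambda>n. \<integral>\<^sup>+k. ennreal ((cmod (u R k - u (r n) k))^2) \<partial>lborel)"
      by (rule nn_integral_liminf) simp
    also have "\<dots> \<le> liminf (\<lambda>n. \<tau> R)"
    proof (rule Liminf_mono)
      have "eventually (\<lambda>n. nat \<lceil>R\<rceil> \<le> n) sequentially" by (rule eventually_ge_at_top)
      then show "eventually (\<lambda>n. (\<integral>\<^sup>+k. ennreal ((cmod (u R k - u (r n) k))^2) \<partial>lborel) \<le> \<tau> R) sequentially"
      proof eventually_elim
        case (elim n)
        then have "R \<le> r n" using r_ge(3)[of n] by linarith
        then have "(\<integral>\<^sup>+k. ennreal ((cmod (u (r n) k - u R k))^2) \<partial>lborel) \<le> \<tau> R"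
          by (rule cauchy[OF R])
        then show ?case by (simp add: norm_minus_commute)
      qed
    qed
    also have "\<dots> = \<tau> R" by (simp add: Liminf_const)
    finally show ?thesis .
  qed
  have lim: "((\<lambda>R. \<integral>\<^sup>+k. ennreal ((cmod (u R k - g k))^2) \<partial>lborel) \<longlongrightarrow> 0) at_top"
  proof (rule tendsto_sandwich[OF _ _ tendsto_const tau])
    show "\<forall>\<^sub>F R in at_top. 0 \<le> (\<integral>\<^sup>+k. ennreal ((cmod (u R k - g k))^2) \<partial>lborel)" by simp
    show "\<forall>\<^sub>F R in at_top. (\<integral>\<^sup>+k. ennreal ((cmod (u R k - g k))^2) \<partial>lborel) \<le> \<tau> R"
      using eventually_ge_at_top[of R0] by eventually_elim (rule bound)
  qed
  have "eventually (\<lambda>R. \<tau> R < 1 \<and> R0 \<le> R) at_top"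
    using eventually_conj[OF order_tendstoD(2)[OF tau, of 1] eventually_ge_at_top[of R0]] by simp
  then obtain R where R: "\<tau> R < 1" "R0 \<le> R" by (auto simp: eventually_at_top_linorder)
  have "sqn g \<le> (\<integral>\<^sup>+k. 2 * ennreal ((cmod (g k - u R k))^2) + 2 * ennreal ((cmod (u R k))^2) \<partial>lborel)"
    unfolding sqn_def
    using sq_tri_ennreal[of "g k - u R k" "u R k" for k] by (intro nn_integral_mono) simp
  also have "\<dots> = 2 * (\<integral>\<^sup>+k. ennreal ((cmod (u R k - g k))^2) \<partial>lborel) + 2 * sqn (u R)"
    by (simp add: nn_integral_add nn_integral_cmult sqn_def norm_minus_commute)
  also have "\<dots> < \<infinity>"
  proof -
    have A: "(\<integral>\<^sup>+k. ennreal ((cmod (u R k - g k))^2) \<partial>lborel) < \<infinity>"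
      using order.strict_trans[OF order.strict_trans1[OF bound[OF R(2)] R(1)] ennreal_one_less_top]
      by (simp add: infinity_ennreal_def)
    have B: "sqn (u R) < \<infinity>" using fin[OF R(2)] .
    show ?thesis using A B by (simp add: ennreal_mult_less_top infinity_ennreal_def)
  qed
  finally have "sqn g < \<infinity>" .
  then have "square_integrable g" using gm by (simp add: si_iff)
  with lim show ?thesis by blast
qed

lemma si_exp_cut: "square_integrable (\<lambda>x. indicator {a..b} x * exp (\<i> * complex_of_real (y * x)))"
proof (rule si_bdd[where C=1 and a=a and b=b])
  show "(\<lambda>x. indicator {a..b} x * exp (\<i> * complex_of_real (y * x))) \<in> borel_measurable lborel"
    by (intro borel_measurable_times borel_measurable_continuous_onI continuous_intros) auto
  show "cmod (indicator {a..b} x * exp (\<i> * complex_of_real (y * x))) \<le> 1" for x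
    by (simp add: indicator_def norm_mult)
  show "indicator {a..b} x * exp (\<i> * complex_of_real (y * x)) \<noteq> 0 \<Longrightarrow> x \<in> {a..b}" for x
    by (auto simp: indicator_def split: if_splits)
qed

lemma si_cut: "square_integrable f \<Longrightarrow> square_integrable (\<lambda>x. indicator {a..b} x * f x)"
  unfolding square_integrable_def
proof
  assume f: "f \<in> borel_measurable lborel \<and> integrable lborel (\<lambda>x. (cmod (f x))\<^sup>2)"
  have [measurable]: "f \<in> borel_measurable borel" using f by simp
  show "(\<lambda>x. indicator {a..b} x * f x) \<in> borel_measurable lborel" by measurable
  show "integrable lborel (\<lambda>x. (cmod (indicator {a..b} x * f x))\<^sup>2)"
  proof (rule Bochner_Integration.integrable_bound[of _ "\<lambda>x. (cmod (f x))\<^sup>2"])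
    show "integrable lborel (\<lambda>x. (cmod (f x))\<^sup>2)" using f by simp
    show "(\<lambda>x. (cmod (indicator {a..b} x * f x))\<^sup>2) \<in> borel_measurable lborel" by measurable
  qed (auto simp: indicator_def)
qed

lemma trunc_eq:
  "trunc_fourier s f R k = complex_of_real (1 / sqrt (2 * pi)) *
     (\<integral>x. (indicator {-R..R} x * f x) * exp (\<i> * complex_of_real ((s * k) * x)) \<partial>lborel)"
  unfolding trunc_fourier_def set_lebesgue_integral_def
  by (intro arg_cong2[where f="(*)"] refl Bochner_Integration.integral_cong)
     (auto simp: indicator_def mult.commute)

lemma ft_bound_gen:
  fixes d :: "real \<Rightarrow> complex"
  assumes d: "square_integrable d" and S: "S > 0" and supp: "\<And>x. d x \<noteq> 0 \<Longrightarrow> x \<in> {-S..S}"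
    and s: "s = 1 \<or> s = -1"
  shows "(\<integral>\<^sup>+k. ennreal ((cmod (complex_of_real (1 / sqrt (2 * pi)) *
      (\<integral>x. d x * exp (\<i> * complex_of_real ((s * k) * x)) \<partial>lborel)))^2) \<partial>lborel)
    \<le> ennreal (\<integral>x. (cmod (d x))^2 \<partial>lborel)"
proof -
  define G where "G y = (cmod (\<integral>x. d x * exp (\<i> * complex_of_real (y * x)) \<partial>lborel))^2" for y
  have Gm[measurable]: "G \<in> borel_measurable borel"
  proof -
    have "G \<in> borel_measurable lborel" unfolding G_def
      using ft_meas[OF si_meas[OF d]] by measurable
    then show ?thesis by simp
  qed
  have eq1: "(cmod (complex_of_real (1 / sqrt (2 * pi)) *
      (\<integral>x. d x * exp (\<i> * complex_of_real ((s * k) * x)) \<partial>lborel)))^2 = G (s * k) / (2 * pi)" for k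
    by (simp add: G_def norm_divide power_divide)
  have "(\<integral>\<^sup>+k. ennreal (G (s * k) / (2 * pi)) \<partial>lborel) = (\<integral>\<^sup>+y. ennreal (G y / (2 * pi)) \<partial>lborel)"
  proof (cases "s = 1")
    case True then show ?thesis by simp
  next
    case False
    then have s1: "s = -1" using s by simp
    show ?thesis
      using nn_integral_real_affine[where c="-1" and t=0 and f="\<lambda>y. ennreal (G y / (2 * pi))"] s1
      by simp
  qed
  also have "\<dots> = (\<integral>\<^sup>+y. ennreal (1 / (2 * pi)) * ennreal (G y) \<partial>lborel)"
  proof (intro nn_integral_cong)
    fix y
    have G0: "0 \<le> G y" by (simp add: G_def)
    have "G y / (2 * pi) = (1 / (2 * pi)) * G y" by simp
    then have "ennreal (G y / (2 * pi)) = ennreal ((1 / (2 * pi)) * G y)" by metis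
    also have "\<dots> = ennreal (1 / (2 * pi)) * ennreal (G y)"
      by (rule ennreal_mult) (use G0 in auto)
    finally show "ennreal (G y / (2 * pi)) = ennreal (1 / (2 * pi)) * ennreal (G y)" .
  qed
  also have "\<dots> = ennreal (1 / (2 * pi)) * (\<integral>\<^sup>+y. ennreal (G y) \<partial>lborel)"
    by (rule nn_integral_cmult) simp
  also have "\<dots> \<le> ennreal (1 / (2 * pi)) * ennreal (2 * pi * (\<integral>x. (cmod (d x))^2 \<partial>lborel))"
  proof (rule mult_left_mono)
    show "(\<integral>\<^sup>+y. ennreal (G y) \<partial>lborel) \<le> ennreal (2 * pi * (\<integral>x. (cmod (d x))^2 \<partial>lborel))"
      unfolding G_def by (rule plancherel_ineq[OF d S supp])
  qed simp
  also have "\<dots> = ennreal (\<integral>x. (cmod (d x))^2 \<partial>lborel)"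
    by (simp add: ennreal_mult[symmetric])
  finally have X: "(\<integral>\<^sup>+k. ennreal (G (s * k) / (2 * pi)) \<partial>lborel) \<le> ennreal (\<integral>x. (cmod (d x))^2 \<partial>lborel)" .
  show ?thesis unfolding eq1 by (rule X)
qed


lemma int_cut_exp:
  assumes f: "square_integrable f"
  shows "integrable lborel (\<lambda>x. (indicator {a..b} x * f x) * exp (\<i> * complex_of_real (y * x)))"
proof -
  have "integrable lborel (\<lambda>x. f x * (indicator {a..b} x * exp (\<i> * complex_of_real (y * x))))"
    by (rule si_mult[OF f si_exp_cut])
  then show ?thesis by (simp add: algebra_simps)
qed


lemma plancherel_exists:
  assumes f: "square_integrable f" and s: "s = 1 \<or> s = -1"
  shows "\<exists>g. fourier_rel s f g"
proof -
  define u where "u R k = trunc_fourier s f R k" for R k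
  define \<tau> where "\<tau> R = ennreal (\<integral>x. (cmod (f x))^2 * indicator {x. R < \<bar>x\<bar>} x \<partial>lborel)" for R
  have fm[measurable]: "f \<in> borel_measurable borel" using si_meas[OF f] by simp
  have um: "u R \<in> borel_measurable lborel" for R
  proof -
    have "(\<lambda>y. \<integral>x. (indicator {-R..R} x * f x) * exp (\<i> * complex_of_real (y * x)) \<partial>lborel) \<in> borel_measurable lborel"
      by (rule ft_meas) measurable
    then have [measurable]: "(\<lambda>y. \<integral>x. (indicator {-R..R} x * f x) * exp (\<i> * complex_of_real (y * x)) \<partial>lborel) \<in> borel_measurable borel"
      by simp
    show ?thesis unfolding u_def trunc_eq by measurable
  qed
  have cauchy: "(\<integral>\<^sup>+k. ennreal ((cmod (u S k - u R k))^2) \<partial>lborel) \<le> \<tau> R" if RS: "1 \<le> R" "R \<le> S" for R S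
  proof -
    define d where "d x = indicator {-S..S} x * f x - indicator {-R..R} x * f x" for x
    have dsi: "square_integrable d" unfolding d_def by (intro si_diff si_cut f)
    have dsupp: "d x \<noteq> 0 \<Longrightarrow> x \<in> {-S..S}" for x using RS
      by (cases "-S \<le> x \<and> x \<le> S"; cases "-R \<le> x \<and> x \<le> R") (auto simp: d_def indicator_def)
    have ueq: "u S k - u R k = complex_of_real (1 / sqrt (2 * pi)) *
        (\<integral>x. d x * exp (\<i> * complex_of_real ((s * k) * x)) \<partial>lborel)" for k
    proof -
      let ?A = "\<lambda>x. (indicator {-S..S} x * f x) * exp (\<i> * complex_of_real ((s * k) * x))"
      let ?B = "\<lambda>x. (indicator {-R..R} x * f x) * exp (\<i> * complex_of_real ((s * k) * x))"
      have "u S k - u R k = complex_of_real (1 / sqrt (2 * pi)) * ((\<integral>x. ?A x \<partial>lborel) - (\<integral>x. ?B x \<partial>lborel))"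
        unfolding u_def trunc_eq by (simp only: right_diff_distrib)
      also have "(\<integral>x. ?A x \<partial>lborel) - (\<integral>x. ?B x \<partial>lborel) = (\<integral>x. ?A x - ?B x \<partial>lborel)"
        by (rule Bochner_Integration.integral_diff[symmetric, OF int_cut_exp[OF f] int_cut_exp[OF f]])
      also have "\<dots> = (\<integral>x. d x * exp (\<i> * complex_of_real ((s * k) * x)) \<partial>lborel)"
        by (simp only: d_def left_diff_distrib)
      finally show ?thesis .
    qed
    have "(\<integral>\<^sup>+k. ennreal ((cmod (u S k - u R k))^2) \<partial>lborel) \<le> ennreal (\<integral>x. (cmod (d x))^2 \<partial>lborel)"
      unfolding ueq using RS by (intro ft_bound_gen[OF dsi _ dsupp s]) auto
    also have "\<dots> \<le> \<tau> R" unfolding \<tau>_def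
    proof (intro ennreal_leI integral_mono)
      show "integrable lborel (\<lambda>x. (cmod (d x))^2)" using dsi by (rule si_int)
      show "integrable lborel (\<lambda>x. (cmod (f x))^2 * indicator {x. R < \<bar>x\<bar>} x)"
        using si_int[OF f] by (rule integrable_real_mult_indicator[rotated]) simp
      fix x
      show "(cmod (d x))^2 \<le> (cmod (f x))^2 * indicator {x. R < \<bar>x\<bar>} x"
        using RS by (auto simp: d_def indicator_def)
    qed
    finally show ?thesis .
  qed
  have tau: "(\<tau> \<longlongrightarrow> 0) at_top"
  proof -
    have "((\<lambda>R. \<integral>x. (cmod (f x))^2 * indicator {x. R < \<bar>x\<bar>} x \<partial>lborel) \<longlongrightarrow> (\<integral>x. 0 \<partial>(lborel :: real measure))) at_top"
    proof (rule integral_dominated_convergence_at_top[where w="\<lambda>x. (cmod (f x))^2" and M=lborel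
        and s="\<lambda>R x. (cmod (f x))^2 * indicator {x. R < \<bar>x\<bar>} x" and f="\<lambda>x. 0"])
      show "integrable lborel (\<lambda>x. (cmod (f x))^2)" using si_int[OF f] .
      show "(\<lambda>x. (cmod (f x))^2 * indicator {x. R < \<bar>x\<bar>} x) \<in> borel_measurable lborel" for R
        by measurable
      show "(\<lambda>x. 0::real) \<in> borel_measurable lborel" by simp
      show "AE x in lborel. ((\<lambda>R. (cmod (f x))^2 * indicator {x. R < \<bar>x\<bar>} x) \<longlongrightarrow> 0) at_top"
      proof (intro AE_I2 tendsto_eventually)
        fix x :: real
        show "\<forall>\<^sub>F R in at_top. (cmod (f x))^2 * indicator {x. R < \<bar>x\<bar>} x = 0"
          using eventually_ge_at_top[of "\<bar>x\<bar>"] by eventually_elim (auto simp: indicator_def)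
      qed
      show "\<forall>\<^sub>F R in at_top. AE x in lborel. norm ((cmod (f x))^2 * indicator {x. R < \<bar>x\<bar>} x) \<le> (cmod (f x))^2"
        by (intro always_eventually allI AE_I2) (auto simp: indicator_def)
    qed
    then have "(\<tau> \<longlongrightarrow> ennreal 0) at_top"
      unfolding \<tau>_def by (intro tendsto_ennrealI) simp
    then show ?thesis by simp
  qed
  have fin: "sqn (u R) < \<infinity>" if R: "1 \<le> R" for R
  proof -
    have "sqn (u R) \<le> ennreal (\<integral>x. (cmod (indicator {-R..R} x * f x))^2 \<partial>lborel)"
      unfolding sqn_def u_def trunc_eq
      using R by (intro ft_bound_gen[OF si_cut[OF f] _ _ s]) (auto simp: indicator_def)
    also have "\<dots> < \<infinity>" by simp
    finally show ?thesis .
  qed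
  obtain g where "square_integrable g" "((\<lambda>R. \<integral>\<^sup>+k. ennreal ((cmod (u R k - g k))^2) \<partial>lborel) \<longlongrightarrow> 0) at_top"
    using L2_complete[OF um cauchy tau fin] by blast
  then have "fourier_rel s f g" unfolding fourier_rel_def u_def by simp
  then show ?thesis by blast
qed

lemma trunc_meas:
  assumes fm: "f \<in> borel_measurable lborel"
  shows "(\<lambda>k. trunc_fourier s f R k) \<in> borel_measurable lborel"
proof -
  have [measurable]: "f \<in> borel_measurable borel" using fm by simp
  have "(\<lambda>y. \<integral>x. (indicator {-R..R} x * f x) * exp (\<i> * complex_of_real (y * x)) \<partial>lborel) \<in> borel_measurable lborel"
    by (rule ft_meas) measurable
  then have [measurable]: "(\<lambda>y. \<integral>x. (indicator {-R..R} x * f x) * exp (\<i> * complex_of_real (y * x)) \<partial>lborel) \<in> borel_measurable borel"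
    by simp
  show ?thesis unfolding trunc_eq by measurable
qed

lemma CS_real:
  assumes u: "square_integrable u" and v: "square_integrable v"
  shows "(\<integral>x. cmod (u x) * cmod (v x) \<partial>lborel)
    \<le> sqrt (\<integral>x. (cmod (u x))^2 \<partial>lborel) * sqrt (\<integral>x. (cmod (v x))^2 \<partial>lborel)"
proof -
  have [measurable]: "u \<in> borel_measurable borel" "v \<in> borel_measurable borel"
    using si_meas[OF u] si_meas[OF v] by simp_all
  define A where "A = (\<integral>x. cmod (u x) * cmod (v x) \<partial>lborel)"
  define B where "B = (\<integral>x. (cmod (u x))^2 \<partial>lborel)"
  define C where "C = (\<integral>x. (cmod (v x))^2 \<partial>lborel)"
  have A0: "A \<ge> 0" "B \<ge> 0" "C \<ge> 0" by (simp_all add: A_def B_def C_def)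
  have "(\<integral>\<^sup>+x. ennreal (cmod (u x)) * ennreal (cmod (v x)) \<partial>lborel)^2
      \<le> (\<integral>\<^sup>+x. (ennreal (cmod (u x)))^2 \<partial>lborel) * (\<integral>\<^sup>+x. (ennreal (cmod (v x)))^2 \<partial>lborel)"
    by (rule Cauchy_Schwarz_nn_integral) measurable
  also have "(\<integral>\<^sup>+x. ennreal (cmod (u x)) * ennreal (cmod (v x)) \<partial>lborel) = ennreal A"
    unfolding A_def
    by (subst nn_integral_eq_integral[symmetric, OF si_normmult[OF u v]]) (auto simp: ennreal_mult)
  also have "(\<integral>\<^sup>+x. (ennreal (cmod (u x)))^2 \<partial>lborel) = ennreal B"
    unfolding B_def
    by (subst nn_integral_eq_integral[symmetric, OF si_int[OF u]]) (auto simp: ennreal_power)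
  also have "(\<integral>\<^sup>+x. (ennreal (cmod (v x)))^2 \<partial>lborel) = ennreal C"
    unfolding C_def
    by (subst nn_integral_eq_integral[symmetric, OF si_int[OF v]]) (auto simp: ennreal_power)
  finally have "ennreal (A^2) \<le> ennreal (B * C)"
    using A0 by (simp add: ennreal_power ennreal_mult)
  then have "A^2 \<le> B * C" using A0 by (simp add: ennreal_le_iff)
  then have "sqrt (A^2) \<le> sqrt (B * C)" by (rule real_sqrt_le_mono)
  then show ?thesis using A0 by (simp add: A_def B_def C_def real_sqrt_mult)
qed

lemma integrable_mult_bdd:
  fixes f g :: "real \<Rightarrow> complex"
  assumes f: "integrable lborel f" and g: "g \<in> borel_measurable lborel" and b: "\<And>x. cmod (g x) \<le> B"
  shows "integrable lborel (\<lambda>x. f x * g x)"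
proof (rule Bochner_Integration.integrable_bound[of _ "\<lambda>x. B * cmod (f x)"])
  show "integrable lborel (\<lambda>x. B * cmod (f x))" using f by auto
  show "(\<lambda>x. f x * g x) \<in> borel_measurable lborel" using f g by measurable
  show "AE x in lborel. norm (f x * g x) \<le> norm (B * cmod (f x))"
  proof (intro AE_I2)
    fix x
    have B: "0 \<le> B" using b[of x] norm_ge_zero order_trans by blast
    have "norm (f x * g x) \<le> cmod (f x) * B" unfolding norm_mult using b[of x] by (intro mult_left_mono) auto
    also have "\<dots> = B * cmod (f x)" by simp
    also have "\<dots> \<le> norm (B * cmod (f x))" by simp
    finally show "norm (f x * g x) \<le> norm (B * cmod (f x))" .
  qed
qed


lemma weak_formula:
  fixes a h c chat :: "real \<Rightarrow> complex"
  assumes a: "square_integrable a" and rel: "fourier_rel 1 a h"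
    and c: "square_integrable c" and cL1: "integrable lborel c"
    and chat: "\<And>q. chat q = (\<integral>x. c x * exp (\<i> * complex_of_real (q * x)) \<partial>lborel)"
    and ac: "integrable lborel (\<lambda>q. a q * chat q)"
  shows "(\<integral>x. h x * c x \<partial>lborel) = complex_of_real (1 / sqrt (2 * pi)) * (\<integral>q. a q * chat q \<partial>lborel)"
proof -
  have h: "square_integrable h" and hlim: "((\<lambda>S. \<integral>\<^sup>+k. ennreal ((norm (trunc_fourier 1 a S k - h k))^2) \<partial>lborel) \<longlongrightarrow> 0) at_top"
    using rel by (auto simp: fourier_rel_def)
  define hS where "hS S x = trunc_fourier 1 a S x" for S x
  define E where "E S = (\<integral>\<^sup>+k. ennreal ((cmod (hS S k - h k))^2) \<partial>lborel)" for S
  define C where "C = (\<integral>x. (cmod (c x))^2 \<partial>lborel)"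
  have hSm: "hS S \<in> borel_measurable lborel" for S
    unfolding hS_def using trunc_meas[OF si_meas[OF a]] by simp
  have Elim: "((\<lambda>S. E S) \<longlongrightarrow> 0) at_top" using hlim unfolding E_def hS_def by simp
  have Efin: "eventually (\<lambda>S. E S < \<infinity>) at_top"
    using order_tendstoD(2)[OF Elim zero_less_one]
    by eventually_elim (metis ennreal_one_less_top infinity_ennreal_def order.strict_trans)
  have Ereal: "(\<integral>k. (cmod (hS S k - h k))^2 \<partial>lborel) = enn2real (E S)" for S
    unfolding E_def using hSm[of S] si_meas[OF h]
    by (intro integral_eq_nn_integral) auto
  have lim1: "((\<lambda>S. \<integral>x. hS S x * c x \<partial>lborel) \<longlongrightarrow> (\<integral>x. h x * c x \<partial>lborel)) at_top"
  proof -
    have bnd: "eventually (\<lambda>S. norm ((\<integral>x. hS S x * c x \<partial>lborel) - (\<integral>x. h x * c x \<partial>lborel))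
        \<le> sqrt (enn2real (E S)) * sqrt C) at_top"
      using Efin
    proof eventually_elim
      case (elim S)
      have d: "square_integrable (\<lambda>x. hS S x - h x)"
        using elim hSm[of S] si_meas[OF h] by (simp add: si_iff sqn_def E_def)
      then have hSsi: "square_integrable (hS S)"
        using si_add[OF d h] by simp
      have "(\<integral>x. hS S x * c x \<partial>lborel) - (\<integral>x. h x * c x \<partial>lborel) = (\<integral>x. (hS S x - h x) * c x \<partial>lborel)"
        using si_mult[OF hSsi c] si_mult[OF h c]
        by (simp add: left_diff_distrib Bochner_Integration.integral_diff)
      also have "norm \<dots> \<le> (\<integral>x. norm ((hS S x - h x) * c x) \<partial>lborel)"
        by (rule integral_norm_bound)
      also have "\<dots> = (\<integral>x. cmod (hS S x - h x) * cmod (c x) \<partial>lborel)"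
        by (simp add: norm_mult)
      also have "\<dots> \<le> sqrt (\<integral>x. (cmod (hS S x - h x))^2 \<partial>lborel) * sqrt C"
        unfolding C_def by (rule CS_real[OF d c])
      finally show ?case by (simp add: Ereal)
    qed
    have E0: "((\<lambda>S. E S) \<longlongrightarrow> ennreal 0) at_top" using Elim by simp
    have "((\<lambda>S. enn2real (E S)) \<longlongrightarrow> 0) at_top"
      using tendsto_enn2real[OF E0] by simp
    then have "((\<lambda>S. sqrt (enn2real (E S)) * sqrt C) \<longlongrightarrow> sqrt 0 * sqrt C) at_top"
      by (rule tendsto_mult[OF tendsto_real_sqrt tendsto_const])
    then have z: "((\<lambda>S. sqrt (enn2real (E S)) * sqrt C) \<longlongrightarrow> 0) at_top" by simp
    have "((\<lambda>S. norm ((\<integral>x. hS S x * c x \<partial>lborel) - (\<integral>x. h x * c x \<partial>lborel))) \<longlongrightarrow> 0) at_top"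
      by (rule tendsto_sandwich[OF _ bnd tendsto_const z]) simp
    then have "((\<lambda>S. (\<integral>x. hS S x * c x \<partial>lborel) - (\<integral>x. h x * c x \<partial>lborel)) \<longlongrightarrow> 0) at_top"
      by (rule tendsto_norm_zero_cancel)
    then show ?thesis by (rule LIM_zero_cancel)
  qed
  have am[measurable]: "a \<in> borel_measurable borel" using si_meas[OF a] by simp
  have cm[measurable]: "c \<in> borel_measurable borel" using si_meas[OF c] by simp
  have eq2: "(\<integral>x. hS S x * c x \<partial>lborel) = complex_of_real (1 / sqrt (2 * pi)) *
      (\<integral>q. indicator {-S..S} q * a q * chat q \<partial>lborel)" for S
  proof -
    define A where "A q = indicator {-S..S} q * a q" for q
    have Am[measurable]: "A \<in> borel_measurable borel" unfolding A_def by measurable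
    have AL1: "integrable lborel A" unfolding A_def by (rule si_integrable_Icc[OF a])
    define F where "F x q = A q * exp (\<i> * complex_of_real (x * q)) * c x" for x q
    have Fint: "integrable (lborel \<Otimes>\<^sub>M lborel) (case_prod F)"
    proof (rule lborel_pair.Fubini_integrable)
      show "case_prod F \<in> borel_measurable (lborel \<Otimes>\<^sub>M lborel)" unfolding F_def by measurable
      have "(\<lambda>x. \<integral>q. norm (F x q) \<partial>lborel) = (\<lambda>x. (\<integral>q. cmod (A q) \<partial>lborel) * cmod (c x))"
        by (rule ext) (simp add: F_def norm_mult)
      moreover have "integrable lborel (\<lambda>x. (\<integral>q. cmod (A q) \<partial>lborel) * cmod (c x))"
        using cL1 by auto
      ultimately show "integrable lborel (\<lambda>x. \<integral>q. norm (case_prod F (x, q)) \<partial>lborel)" by simp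
      show "AE x in lborel. integrable lborel (\<lambda>q. case_prod F (x, q))"
      proof (intro AE_I2)
        fix x
        have "integrable lborel (\<lambda>q. A q * (exp (\<i> * complex_of_real (x * q)) * c x))"
          by (rule integrable_mult_bdd[OF AL1, where B="cmod (c x)"]) (auto simp: norm_mult)
        then show "integrable lborel (\<lambda>q. case_prod F (x, q))" by (simp add: F_def mult.assoc)
      qed
    qed
    have "(\<integral>x. hS S x * c x \<partial>lborel) = (\<integral>x. complex_of_real (1 / sqrt (2 * pi)) * (\<integral>q. F x q \<partial>lborel) \<partial>lborel)"
      by (simp add: hS_def trunc_eq F_def A_def integral_mult_left_zero[symmetric] mult.assoc)
    also have "\<dots> = complex_of_real (1 / sqrt (2 * pi)) * (\<integral>x. (\<integral>q. F x q \<partial>lborel) \<partial>lborel)"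
      by (rule integral_mult_right_zero)
    also have "(\<integral>x. (\<integral>q. F x q \<partial>lborel) \<partial>lborel) = (\<integral>q. (\<integral>x. F x q \<partial>lborel) \<partial>lborel)"
      by (rule lborel_pair.Fubini_integral[symmetric, OF Fint])
    also have "\<dots> = (\<integral>q. A q * chat q \<partial>lborel)"
    proof (intro Bochner_Integration.integral_cong refl)
      fix q
      have "(\<integral>x. F x q \<partial>lborel) = (\<integral>x. A q * (c x * exp (\<i> * complex_of_real (q * x))) \<partial>lborel)"
        by (intro Bochner_Integration.integral_cong) (auto simp: F_def mult.commute mult.left_commute)
      also have "\<dots> = A q * chat q" by (simp add: chat)
      finally show "(\<integral>x. F x q \<partial>lborel) = A q * chat q" .
    qed
    finally show ?thesis by (simp add: A_def)
  qed
  have lim3: "((\<lambda>S. \<integral>q. indicator {-S..S} q * a q * chat q \<partial>lborel) \<longlongrightarrow> (\<integral>q. a q * chat q \<partial>lborel)) at_top"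
  proof (rule integral_dominated_convergence_at_top[where w="\<lambda>q. cmod (a q * chat q)" and M=lborel
        and s="\<lambda>S q. indicator {-S..S} q * a q * chat q" and f="\<lambda>q. a q * chat q"])
    show "integrable lborel (\<lambda>q. cmod (a q * chat q))" using ac by auto
    show "(\<lambda>q. a q * chat q) \<in> borel_measurable lborel" using ac by auto
    show "(\<lambda>q. indicator {-S..S} q * a q * chat q) \<in> borel_measurable lborel" for S
      using borel_measurable_integrable[OF ac] by (simp add: mult.assoc)
    show "AE q in lborel. ((\<lambda>S. indicator {-S..S} q * a q * chat q) \<longlongrightarrow> a q * chat q) at_top"
    proof (intro AE_I2 tendsto_eventually)
      fix q :: real
      show "\<forall>\<^sub>F S in at_top. indicator {-S..S} q * a q * chat q = a q * chat q"
        using eventually_ge_at_top[of "\<bar>q\<bar>"] by eventually_elim (auto simp: indicator_def)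
    qed
    show "\<forall>\<^sub>F S in at_top. AE q in lborel. norm (indicator {-S..S} q * a q * chat q) \<le> cmod (a q * chat q)"
      by (intro always_eventually allI AE_I2) (auto simp: indicator_def norm_mult)
  qed
  have lim2: "((\<lambda>S. \<integral>x. hS S x * c x \<partial>lborel) \<longlongrightarrow> complex_of_real (1 / sqrt (2 * pi)) * (\<integral>q. a q * chat q \<partial>lborel)) at_top"
    unfolding eq2 by (intro tendsto_mult tendsto_const lim3)
  show ?thesis using tendsto_unique[OF _ lim1 lim2] by simp
qed

lemma tail_to_zero:
  fixes g :: "real \<Rightarrow> real"
  assumes g: "integrable lborel g"
  shows "((\<lambda>L. \<integral>q. \<bar>g q\<bar> * indicator {q. L < \<bar>q\<bar>} q \<partial>lborel) \<longlongrightarrow> 0) at_top"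
proof -
  have gm[measurable]: "g \<in> borel_measurable borel" using borel_measurable_integrable[OF g] by simp
  have "((\<lambda>L. \<integral>q. \<bar>g q\<bar> * indicator {q. L < \<bar>q\<bar>} q \<partial>lborel) \<longlongrightarrow> (\<integral>q. 0 \<partial>(lborel :: real measure))) at_top"
  proof (rule integral_dominated_convergence_at_top[where w="\<lambda>q. \<bar>g q\<bar>" and M=lborel
      and s="\<lambda>L q. \<bar>g q\<bar> * indicator {q. L < \<bar>q\<bar>} q" and f="\<lambda>q. 0"])
    show "integrable lborel (\<lambda>q. \<bar>g q\<bar>)" using g by auto
    show "(\<lambda>q. \<bar>g q\<bar> * indicator {q. L < \<bar>q\<bar>} q) \<in> borel_measurable lborel" for L by measurable
    show "(\<lambda>x. 0::real) \<in> borel_measurable lborel" by simp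
    show "AE q in lborel. ((\<lambda>L. \<bar>g q\<bar> * indicator {q. L < \<bar>q\<bar>} q) \<longlongrightarrow> 0) at_top"
    proof (intro AE_I2 tendsto_eventually)
      fix q :: real
      show "\<forall>\<^sub>F L in at_top. \<bar>g q\<bar> * indicator {q. L < \<bar>q\<bar>} q = 0"
        using eventually_ge_at_top[of "\<bar>q\<bar>"] by eventually_elim (auto simp: indicator_def)
    qed
    show "\<forall>\<^sub>F L in at_top. AE q in lborel. norm (\<bar>g q\<bar> * indicator {q. L < \<bar>q\<bar>} q) \<le> \<bar>g q\<bar>"
      by (intro always_eventually allI AE_I2) (auto simp: indicator_def)
  qed
  then show ?thesis by simp
qed

lemma RL_lattice:
  fixes g :: "real \<Rightarrow> complex"
  assumes g2: "square_integrable g" and g1: "integrable lborel g"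
  shows "(\<lambda>n::nat. \<integral>q. g q * exp (\<i> * complex_of_real ((real n * pi) * q)) \<partial>lborel) \<longlonglongrightarrow> 0"
proof -
  have gm[measurable]: "g \<in> borel_measurable borel" using si_meas[OF g2] by simp
  define I where "I n = (\<integral>q. g q * exp (\<i> * complex_of_real ((real n * pi) * q)) \<partial>lborel)" for n :: nat
  have "\<forall>r>0. \<exists>N. \<forall>n\<ge>N. norm (I n) < r"
  proof (intro allI impI)
    fix r :: real assume r: "r > 0"
    have "eventually (\<lambda>L. (\<integral>q. \<bar>cmod (g q)\<bar> * indicator {q. L < \<bar>q\<bar>} q \<partial>lborel) < r / 2) at_top"
    proof -
      have t0: "((\<lambda>L. \<integral>q. \<bar>cmod (g q)\<bar> * indicator {q. L < \<bar>q\<bar>} q \<partial>lborel) \<longlongrightarrow> 0) at_top"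
        by (rule tail_to_zero) (use g1 in auto)
      show ?thesis using order_tendstoD(2)[OF t0, of "r / 2"] r by simp
    qed
    then obtain L0 where L0: "\<And>L. L \<ge> L0 \<Longrightarrow> (\<integral>q. cmod (g q) * indicator {q. L < \<bar>q\<bar>} q \<partial>lborel) < r / 2"
      by (auto simp: eventually_at_top_linorder)
    define L :: nat where "L = nat \<lceil>max L0 1\<rceil>"
    have L1: "real L \<ge> 1" and LL0: "real L \<ge> L0" unfolding L_def by linarith+
    have tail: "(\<integral>q. cmod (g q) * indicator {q. real L < \<bar>q\<bar>} q \<partial>lborel) < r / 2"
      using L0[OF LL0] .
    define gL where "gL q = indicator {- real L..real L} q * g q" for q
    have gL2: "square_integrable gL" unfolding gL_def by (rule si_cut[OF g2])
    have gL1: "integrable lborel gL" unfolding gL_def by (rule si_integrable_Icc[OF g2])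
    have gLsupp: "gL q \<noteq> 0 \<Longrightarrow> q \<in> {- real L..real L}" for q by (auto simp: gL_def indicator_def split: if_splits)
    define c where "c n = (\<integral>q. gL q * exp (\<i> * complex_of_real ((real n * pi) * q)) \<partial>lborel)" for n :: nat
    define M where "M = 2 * real L * (\<integral>q. (cmod (gL q))^2 \<partial>lborel)"
    have bes: "(\<Sum>n<N. (cmod (c n))^2) \<le> M" for N
    proof -
      have inj: "inj_on (\<lambda>n::nat. real n * pi) {..<N}" by (auto simp: inj_on_def)
      have "(\<Sum>n<N. (cmod (c n))^2) = (\<Sum>x\<in>(\<lambda>n. real n * pi) ` {..<N}. (cmod (\<integral>q. gL q * exp (\<i> * complex_of_real (x * q)) \<partial>lborel))^2)"
        by (simp add: sum.reindex[OF inj] c_def)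
      also have "\<dots> \<le> M" unfolding M_def
      proof (rule bessel[OF gL2 _ gLsupp])
        show "0 < real L" using L1 by simp
        show "finite ((\<lambda>n. real n * pi) ` {..<N})" by simp
        fix x y assume "x \<in> (\<lambda>n. real n * pi) ` {..<N}" "y \<in> (\<lambda>n. real n * pi) ` {..<N}"
        then obtain n m where nm: "x = real n * pi" "y = real m * pi" by auto
        have e: "(x - y) * real L = of_int ((int n - int m) * int L) * pi" using nm by (simp add: algebra_simps)
        show "sin ((x - y) * real L) = 0" unfolding e by (simp only: sin_times_pi_eq_0 Ints_of_int)
      qed
      finally show ?thesis .
    qed
    have "summable (\<lambda>n. (cmod (c n))^2)"
      by (rule summableI_nonneg_bounded[where x=M]) (auto intro: bes)
    then have "(\<lambda>n. (cmod (c n))^2) \<longlonglongrightarrow> 0" by (rule summable_LIMSEQ_zero)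
    then have "(\<lambda>n. sqrt ((cmod (c n))^2)) \<longlonglongrightarrow> sqrt 0" by (rule tendsto_real_sqrt)
    then have cz: "(\<lambda>n. cmod (c n)) \<longlonglongrightarrow> 0" by simp
    then have "\<exists>N. \<forall>n\<ge>N. cmod (c n) < r / 2"
      using r unfolding LIMSEQ_iff by (metis half_gt_zero norm_of_real abs_norm_cancel diff_zero real_norm_def)
    then obtain N where N: "\<And>n. n \<ge> N \<Longrightarrow> cmod (c n) < r / 2" by blast
    show "\<exists>N. \<forall>n\<ge>N. norm (I n) < r"
    proof (intro exI allI impI)
      fix n assume n: "n \<ge> N"
      have e: "(\<lambda>q. exp (\<i> * complex_of_real ((real n * pi) * q))) \<in> borel_measurable lborel"
        using cexp_meas[of "real n * pi"] by simp
      have i1: "integrable lborel (\<lambda>q. g q * exp (\<i> * complex_of_real ((real n * pi) * q)))"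
        by (rule integrable_mult_bdd[OF g1 e, where B=1]) simp
      have i2: "integrable lborel (\<lambda>q. gL q * exp (\<i> * complex_of_real ((real n * pi) * q)))"
        by (rule integrable_mult_bdd[OF gL1 e, where B=1]) simp
      have "I n - c n = (\<integral>q. (g q - gL q) * exp (\<i> * complex_of_real ((real n * pi) * q)) \<partial>lborel)"
        unfolding I_def c_def using i1 i2 by (simp add: left_diff_distrib Bochner_Integration.integral_diff)
      also have "norm \<dots> \<le> (\<integral>q. norm ((g q - gL q) * exp (\<i> * complex_of_real ((real n * pi) * q))) \<partial>lborel)"
        by (rule integral_norm_bound)
      also have "\<dots> = (\<integral>q. cmod (g q) * indicator {q. real L < \<bar>q\<bar>} q \<partial>lborel)"
        by (intro Bochner_Integration.integral_cong) (auto simp: gL_def indicator_def norm_mult)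
      finally have "norm (I n - c n) < r / 2" using tail by linarith
      moreover have "norm (c n) < r / 2" using N[OF n] by simp
      ultimately have "norm (I n - c n) + norm (c n) < r" by linarith
      moreover have "norm (I n) \<le> norm (I n - c n) + norm (c n)"
        using norm_triangle_ineq[of "I n - c n" "c n"] by simp
      ultimately show "norm (I n) < r" by linarith
    qed
  qed
  then show ?thesis unfolding I_def[symmetric] by (simp add: LIMSEQ_iff)
qed

lemma si_decay:
  fixes g :: "real \<Rightarrow> complex"
  assumes gm: "g \<in> borel_measurable lborel" and b: "\<And>q. (cmod (g q))^2 \<le> C / (1 + (q - k)^2)"
  shows "square_integrable g"
  unfolding square_integrable_def
proof
  show "g \<in> borel_measurable lborel" by fact
  have i0: "integrable lborel (\<lambda>x::real. inverse (1 + x^2))"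
    using integrable_inverse_1_plus_square by (simp add: set_integrable_def einterval_def)
  have i1: "integrable lborel (\<lambda>x. inverse (1 + (- k + 1 * x)^2))"
    by (rule lborel_integrable_real_affine[OF i0]) simp
  have i2: "integrable lborel (\<lambda>q. C * inverse (1 + (q - k)^2))"
    using i1 by (intro Bochner_Integration.integrable_mult_right) (simp add: algebra_simps)
  show "integrable lborel (\<lambda>x. (cmod (g x))^2)"
  proof (rule Bochner_Integration.integrable_bound[OF i2])
    show "(\<lambda>x. (cmod (g x))^2) \<in> borel_measurable lborel" using gm by measurable
    show "AE x in lborel. norm ((cmod (g x))^2) \<le> norm (C * inverse (1 + (x - k)^2))"
    proof (intro AE_I2)
      fix x
      have p: "0 < 1 + (x - k)^2" by (simp add: add_pos_nonneg)
      have "norm ((cmod (g x))^2) = (cmod (g x))^2" by simp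
      also have "\<dots> \<le> C / (1 + (x - k)^2)" by (rule b)
      also have "\<dots> = C * inverse (1 + (x - k)^2)" by (simp add: divide_inverse)
      also have "\<dots> \<le> norm (C * inverse (1 + (x - k)^2))" by simp
      finally show "norm ((cmod (g x))^2) \<le> norm (C * inverse (1 + (x - k)^2))" .
    qed
  qed
qed

definition Eint :: "real \<Rightarrow> real \<Rightarrow> complex" where
  "Eint \<alpha> R = (\<integral>x. indicator {0..R} x * exp (\<i> * complex_of_real (\<alpha> * x)) \<partial>lborel)"

lemma Eint_formula:
  assumes R: "R \<ge> 0"
  shows "Eint \<alpha> R = (if \<alpha> = 0 then complex_of_real R
     else (exp (\<i> * complex_of_real (\<alpha> * R)) - 1) / (\<i> * complex_of_real \<alpha>))"
proof -
  have "Eint \<alpha> R = (LINT x:{0..R}|lborel. exp (\<i> * complex_of_real (\<alpha> * x)))"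
    unfolding Eint_def set_lebesgue_integral_def
    by (intro Bochner_Integration.integral_cong) (auto simp: indicator_def)
  also have "\<dots> = (if \<alpha> = 0 then complex_of_real (R - 0)
     else (exp (\<i> * complex_of_real (\<alpha> * R)) - exp (\<i> * complex_of_real (\<alpha> * 0))) / (\<i> * complex_of_real \<alpha>))"
    using R by (rule set_int_cexp)
  finally show ?thesis by simp
qed

lemma Eint_bound1:
  assumes R: "R \<ge> 0"
  shows "cmod (Eint \<alpha> R) \<le> R"
proof -
  have "cmod (Eint \<alpha> R) \<le> (\<integral>x. norm (indicator {0..R} x * exp (\<i> * complex_of_real (\<alpha> * x))) \<partial>lborel)"
    unfolding Eint_def by (rule integral_norm_bound)
  also have "\<dots> = (\<integral>x. indicator {0..R} x \<partial>lborel)"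
    by (intro Bochner_Integration.integral_cong) (auto simp: indicator_def norm_mult)
  also have "\<dots> = R" using R by simp
  finally show ?thesis .
qed

lemma Eint_bound2:
  assumes R: "R \<ge> 0" and a: "\<alpha> \<noteq> 0"
  shows "cmod (Eint \<alpha> R) \<le> 2 / \<bar>\<alpha>\<bar>"
proof -
  have "cmod (exp (\<i> * complex_of_real (\<alpha> * R)) - 1) \<le> cmod (exp (\<i> * complex_of_real (\<alpha> * R))) + cmod 1"
    by (rule norm_triangle_ineq4)
  also have "\<dots> = 2" by simp
  finally have n: "cmod (exp (\<i> * complex_of_real (\<alpha> * R)) - 1) \<le> 2" .
  have "cmod (Eint \<alpha> R) = cmod (exp (\<i> * complex_of_real (\<alpha> * R)) - 1) / \<bar>\<alpha>\<bar>"
    using R a by (simp add: Eint_formula norm_divide norm_mult)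
  also have "\<dots> \<le> 2 / \<bar>\<alpha>\<bar>" using n a by (simp add: divide_right_mono)
  finally show ?thesis .
qed

lemma Eint_sq:
  assumes R: "R \<ge> 0"
  shows "(cmod (Eint \<alpha> R))^2 \<le> (R^2 + 4) / (1 + \<alpha>^2)"
proof -
  have p: "0 < 1 + \<alpha>^2" by (simp add: add_pos_nonneg)
  have b1: "(cmod (Eint \<alpha> R))^2 \<le> R^2"
    using Eint_bound1[OF R] by (intro power_mono) auto
  have b2: "\<alpha>^2 * (cmod (Eint \<alpha> R))^2 \<le> 4"
  proof (cases "\<alpha> = 0")
    case True then show ?thesis by simp
  next
    case False
    have "\<bar>\<alpha>\<bar> * cmod (Eint \<alpha> R) \<le> \<bar>\<alpha>\<bar> * (2 / \<bar>\<alpha>\<bar>)"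
      using Eint_bound2[OF R False] by (intro mult_left_mono) auto
    also have "\<dots> = 2" using False by simp
    finally have "\<bar>\<alpha>\<bar> * cmod (Eint \<alpha> R) \<le> 2" .
    then have "(\<bar>\<alpha>\<bar> * cmod (Eint \<alpha> R))^2 \<le> 2^2" by (intro power_mono) auto
    then show ?thesis by (simp add: power_mult_distrib)
  qed
  have "(1 + \<alpha>^2) * (cmod (Eint \<alpha> R))^2 \<le> R^2 + 4" using b1 b2 by (simp add: algebra_simps)
  then show ?thesis using p by (simp add: field_simps)
qed

lemma Eint_meas: "(\<lambda>q. Eint (q - k) R) \<in> borel_measurable lborel"
proof -
  have m: "(\<lambda>(q, x). indicator {0..R} x * exp (\<i> * complex_of_real ((q - k) * x))) \<in> borel_measurable (lborel \<Otimes>\<^sub>M lborel)"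
    by measurable
  show ?thesis unfolding Eint_def
    by (rule lborel.borel_measurable_lebesgue_integral[OF m])
qed

lemma Eint_si:
  assumes R: "R \<ge> 0"
  shows "square_integrable (\<lambda>q. Eint (q - k) R)"
  by (rule si_decay[OF Eint_meas, where C="R^2 + 4" and k=k]) (rule Eint_sq[OF R])

definition Sk :: "real \<Rightarrow> real \<Rightarrow> real" where
  "Sk k q = sin (k^2 - q^2) / (k - q)"

lemma Sk_bdd: "\<bar>Sk k q\<bar> \<le> 2 * \<bar>k\<bar> + 1"
proof (cases "\<bar>k - q\<bar> < 1")
  case True
  show ?thesis
  proof (cases "k = q")
    case True then show ?thesis by (simp add: Sk_def)
  next
    case False
    have "\<bar>sin (k^2 - q^2)\<bar> \<le> \<bar>k^2 - q^2\<bar>" by (rule abs_sin_x_le_abs_x)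
    also have "\<dots> = \<bar>k - q\<bar> * \<bar>k + q\<bar>" by (simp add: power2_eq_square algebra_simps abs_mult[symmetric])
    finally have "\<bar>Sk k q\<bar> \<le> \<bar>k + q\<bar>" using False by (simp add: Sk_def abs_divide field_simps)
    also have "\<dots> \<le> 2 * \<bar>k\<bar> + 1" using True by linarith
    finally show ?thesis .
  qed
next
  case False
  then have "\<bar>Sk k q\<bar> \<le> 1 / \<bar>k - q\<bar>"
    by (simp add: Sk_def abs_divide divide_right_mono)
  also have "\<dots> \<le> 1" using False by simp
  finally show ?thesis by linarith
qed

lemma Sk_sq: "(Sk k q)^2 \<le> ((2 * \<bar>k\<bar> + 1)^2 + 1) / (1 + (q - k)^2)"
proof -
  have p: "0 < 1 + (q - k)^2" by (simp add: add_pos_nonneg)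
  have b1: "(Sk k q)^2 \<le> (2 * \<bar>k\<bar> + 1)^2"
    using Sk_bdd[of k q] by (metis abs_ge_zero power2_abs power_mono)
  have b2: "(q - k)^2 * (Sk k q)^2 \<le> 1"
  proof (cases "k = q")
    case True then show ?thesis by simp
  next
    case False
    have "(q - k)^2 * (Sk k q)^2 = (sin (k^2 - q^2))^2"
      using False by (simp add: Sk_def power_divide power2_commute)
    also have "\<dots> \<le> 1" by (simp add: abs_square_le_1)
    finally show ?thesis .
  qed
  have "(1 + (q - k)^2) * (Sk k q)^2 \<le> (2 * \<bar>k\<bar> + 1)^2 + 1" using b1 b2 by (simp add: algebra_simps)
  then show ?thesis using p by (simp add: field_simps)
qed

lemma Sk_si: "square_integrable (\<lambda>q. complex_of_real (Sk k q))"
proof (rule si_decay[where C="(2 * \<bar>k\<bar> + 1)^2 + 1" and k=k])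
  show "(\<lambda>q. complex_of_real (Sk k q)) \<in> borel_measurable lborel"
    unfolding Sk_def by measurable
  show "(cmod (complex_of_real (Sk k q)))^2 \<le> ((2 * \<bar>k\<bar> + 1)^2 + 1) / (1 + (q - k)^2)" for q
    using Sk_sq[of k q] by simp
qed

lemma exp_sin_id: "exp (- (\<i> * complex_of_real t)) - exp (\<i> * complex_of_real t) = - 2 * \<i> * complex_of_real (sin t)"
  by (simp add: complex_eq_iff Re_exp Im_exp)

lemma T_formula:
  fixes a h :: "real \<Rightarrow> complex"
  assumes a: "square_integrable a" and rel: "fourier_rel 1 a h" and R: "R \<ge> 0"
  shows "trunc_fourier (-1) (Proj h) R k = complex_of_real (1 / (2 * pi)) * (\<integral>q. a q * Eint (q - k) R \<partial>lborel)"
proof -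
  have h: "square_integrable h" using rel by (simp add: fourier_rel_def)
  have hm[measurable]: "h \<in> borel_measurable borel" using si_meas[OF h] by simp
  define c where "c x = indicator {0..R} x * exp (\<i> * complex_of_real ((-k) * x))" for x
  have csi: "square_integrable c" unfolding c_def by (rule si_exp_cut)
  have cL1: "integrable lborel c"
  proof -
    have "set_integrable lborel {0..R} (\<lambda>x. exp (\<i> * complex_of_real ((-k) * x)))"
      by (rule borel_integrable_atLeastAtMost') (intro continuous_intros)
    then show ?thesis unfolding set_integrable_def c_def
      by (rule Bochner_Integration.integrable_cong[THEN iffD1, rotated -1]) (auto simp: indicator_def)
  qed
  have chat: "Eint (q - k) R = (\<integral>x. c x * exp (\<i> * complex_of_real (q * x)) \<partial>lborel)" for q
    unfolding Eint_def c_def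
    by (intro Bochner_Integration.integral_cong) (auto simp: indicator_def mult_exp_exp algebra_simps)
  have ac: "integrable lborel (\<lambda>q. a q * Eint (q - k) R)" by (rule si_mult[OF a Eint_si[OF R]])
  have W: "(\<integral>x. h x * c x \<partial>lborel) = complex_of_real (1 / sqrt (2 * pi)) * (\<integral>q. a q * Eint (q - k) R \<partial>lborel)"
    by (rule weak_formula[OF a rel csi cL1 chat ac])
  have "trunc_fourier (-1) (Proj h) R k = complex_of_real (1 / sqrt (2 * pi)) *
      (\<integral>x. (indicator {-R..R} x * Proj h x) * exp (\<i> * complex_of_real ((-1 * k) * x)) \<partial>lborel)"
    by (rule trunc_eq)
  also have "(\<integral>x. (indicator {-R..R} x * Proj h x) * exp (\<i> * complex_of_real ((-1 * k) * x)) \<partial>lborel) =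
      (\<integral>x. h x * c x \<partial>lborel)"
  proof (rule integral_cong_AE)
    show "(\<lambda>x. (indicator {-R..R} x * Proj h x) * exp (\<i> * complex_of_real ((-1 * k) * x))) \<in> borel_measurable lborel"
      unfolding Proj_def by measurable
    show "(\<lambda>x. h x * c x) \<in> borel_measurable lborel" unfolding c_def by measurable
    show "AE x in lborel. (indicator {-R..R} x * Proj h x) * exp (\<i> * complex_of_real ((-1 * k) * x)) = h x * c x"
      using AE_lborel_singleton[of 0]
    proof eventually_elim
      case (elim x)
      show ?case using elim R by (cases "x > 0") (auto simp: Proj_def c_def indicator_def)
    qed
  qed
  also have "complex_of_real (1 / sqrt (2 * pi)) * (\<integral>x. h x * c x \<partial>lborel) =
      (complex_of_real (1 / sqrt (2 * pi)) * complex_of_real (1 / sqrt (2 * pi))) * (\<integral>q. a q * Eint (q - k) R \<partial>lborel)"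
    by (simp add: W)
  also have "complex_of_real (1 / sqrt (2 * pi)) * complex_of_real (1 / sqrt (2 * pi)) = complex_of_real (1 / (2 * pi))"
  proof -
    have "sqrt (2 * pi) * sqrt (2 * pi) = 2 * pi" using real_sqrt_pow2[of "2 * pi"] by (simp add: power2_eq_square)
    then show ?thesis by (simp flip: of_real_mult)
  qed
  finally show ?thesis .
qed


lemma si_Ut: "square_integrable \<psi> \<Longrightarrow> square_integrable (Ut t \<psi>)"
  unfolding square_integrable_def Ut_def
proof (elim conjE, intro conjI)
  assume m: "\<psi> \<in> borel_measurable lborel" and i: "integrable lborel (\<lambda>x. (cmod (\<psi> x))\<^sup>2)"
  have [measurable]: "\<psi> \<in> borel_measurable borel" using m by simp
  show "(\<lambda>k. exp (- \<i> * complex_of_real (k\<^sup>2 * t)) * \<psi> k) \<in> borel_measurable lborel" by measurable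
  show "integrable lborel (\<lambda>x. (cmod (exp (- \<i> * complex_of_real (x\<^sup>2 * t)) * \<psi> x))\<^sup>2)"
    using i by (simp add: norm_mult)
qed

lemma exp_pair1: "exp (- \<i> * complex_of_real (k\<^sup>2 * 1)) * exp (- \<i> * complex_of_real (q\<^sup>2 * (-1)))
    = exp (- (\<i> * complex_of_real (k\<^sup>2 - q\<^sup>2)))"
  by (simp add: mult_exp_exp algebra_simps)

lemma exp_pair2: "exp (- \<i> * complex_of_real (k\<^sup>2 * (-1))) * exp (- \<i> * complex_of_real (q\<^sup>2 * 1))
    = exp (\<i> * complex_of_real (k\<^sup>2 - q\<^sup>2))"
  by (simp add: mult_exp_exp algebra_simps)

lemma pw_id:
  assumes R: "R \<ge> 0"
  shows "(exp (- (\<i> * complex_of_real (k\<^sup>2 - q\<^sup>2))) - exp (\<i> * complex_of_real (k\<^sup>2 - q\<^sup>2))) * Eint (q - k) R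
    = 2 * complex_of_real (Sk k q) * (exp (\<i> * complex_of_real ((q - k) * R)) - 1)"
proof (cases "q = k")
  case True then show ?thesis by (simp add: Sk_def)
next
  case False
  then have ne: "complex_of_real (q - k) \<noteq> 0" by simp
  have "(exp (- (\<i> * complex_of_real (k\<^sup>2 - q\<^sup>2))) - exp (\<i> * complex_of_real (k\<^sup>2 - q\<^sup>2))) * Eint (q - k) R
      = (- 2 * \<i> * complex_of_real (sin (k\<^sup>2 - q\<^sup>2))) *
        ((exp (\<i> * complex_of_real ((q - k) * R)) - 1) / (\<i> * complex_of_real (q - k)))"
    using False R by (simp only: exp_sin_id Eint_formula) simp
  also have "\<dots> = 2 * complex_of_real (Sk k q) * (exp (\<i> * complex_of_real ((q - k) * R)) - 1)"
    using ne False unfolding Sk_def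
    by (simp add: field_simps of_real_divide)
  finally show ?thesis .
qed


lemma ring_aux: "(e1 * (e2 * p * E) - e3 * (e4 * p * E)) = ((e1 * e2) - (e3 * e4)) * E * (p :: complex)"
  by (simp add: algebra_simps)

lemma D_formula:
  fixes \<psi> hm hp :: "real \<Rightarrow> complex"
  assumes psi: "square_integrable \<psi>" and R: "R \<ge> 0"
    and relm: "fourier_rel 1 (Ut (-1) \<psi>) hm" and relp: "fourier_rel 1 (Ut 1 \<psi>) hp"
  shows "Ut 1 (trunc_fourier (-1) (Proj hm) R) k - Ut (-1) (trunc_fourier (-1) (Proj hp) R) k
     = complex_of_real (1 / pi) * ((\<integral>q. \<psi> q * complex_of_real (Sk k q) * exp (\<i> * complex_of_real ((q - k) * R)) \<partial>lborel)
        - (\<integral>q. \<psi> q * complex_of_real (Sk k q) \<partial>lborel))"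
proof -
  define E where "E q = Eint (q - k) R" for q
  define em where "em = exp (- \<i> * complex_of_real (k\<^sup>2 * 1))"
  define ep where "ep = exp (- \<i> * complex_of_real (k\<^sup>2 * (-1)))"
  define c' where "c' = complex_of_real (1 / (2 * pi))"
  have im: "integrable lborel (\<lambda>q. Ut (-1) \<psi> q * E q)"
    unfolding E_def by (rule si_mult[OF si_Ut[OF psi] Eint_si[OF R]])
  have ip: "integrable lborel (\<lambda>q. Ut 1 \<psi> q * E q)"
    unfolding E_def by (rule si_mult[OF si_Ut[OF psi] Eint_si[OF R]])
  have iS: "integrable lborel (\<lambda>q. \<psi> q * complex_of_real (Sk k q))"
    by (rule si_mult[OF psi Sk_si])
  have iSe: "integrable lborel (\<lambda>q. \<psi> q * complex_of_real (Sk k q) * exp (\<i> * complex_of_real ((q - k) * R)))"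
    by (rule integrable_mult_bdd[OF iS, where B=1]) (simp_all add: norm_mult)
  have pw: "em * (Ut (-1) \<psi> q * E q) - ep * (Ut 1 \<psi> q * E q)
      = 2 * (\<psi> q * complex_of_real (Sk k q) * exp (\<i> * complex_of_real ((q - k) * R)) - \<psi> q * complex_of_real (Sk k q))" for q
  proof -
    have "em * (Ut (-1) \<psi> q * E q) - ep * (Ut 1 \<psi> q * E q) =
        (em * exp (- \<i> * complex_of_real (q\<^sup>2 * (-1))) - ep * exp (- \<i> * complex_of_real (q\<^sup>2 * 1))) * E q * \<psi> q"
      unfolding Ut_def by (rule ring_aux)
    also have "\<dots> = (exp (- (\<i> * complex_of_real (k\<^sup>2 - q\<^sup>2))) - exp (\<i> * complex_of_real (k\<^sup>2 - q\<^sup>2))) * Eint (q - k) R * \<psi> q"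
      unfolding em_def ep_def E_def by (simp only: exp_pair1 exp_pair2)
    also have "\<dots> = 2 * complex_of_real (Sk k q) * (exp (\<i> * complex_of_real ((q - k) * R)) - 1) * \<psi> q"
      by (simp only: pw_id[OF R])
    also have "\<dots> = 2 * (\<psi> q * complex_of_real (Sk k q) * exp (\<i> * complex_of_real ((q - k) * R)) - \<psi> q * complex_of_real (Sk k q))"
      by (simp add: algebra_simps)
    finally show ?thesis .
  qed
  have "Ut 1 (trunc_fourier (-1) (Proj hm) R) k - Ut (-1) (trunc_fourier (-1) (Proj hp) R) k
      = em * (c' * (\<integral>q. Ut (-1) \<psi> q * E q \<partial>lborel)) - ep * (c' * (\<integral>q. Ut 1 \<psi> q * E q \<partial>lborel))"
    unfolding em_def ep_def c'_def E_def
    by (simp only: Ut_def[of _ "trunc_fourier (-1) _ R"] T_formula[OF si_Ut[OF psi] relm R] T_formula[OF si_Ut[OF psi] relp R])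
  also have "\<dots> = c' * ((\<integral>q. em * (Ut (-1) \<psi> q * E q) \<partial>lborel) - (\<integral>q. ep * (Ut 1 \<psi> q * E q) \<partial>lborel))"
    by (simp add: algebra_simps)
  also have "(\<integral>q. em * (Ut (-1) \<psi> q * E q) \<partial>lborel) - (\<integral>q. ep * (Ut 1 \<psi> q * E q) \<partial>lborel)
      = (\<integral>q. em * (Ut (-1) \<psi> q * E q) - ep * (Ut 1 \<psi> q * E q) \<partial>lborel)"
    using im ip by (intro Bochner_Integration.integral_diff[symmetric]) auto
  also have "\<dots> = (\<integral>q. 2 * (\<psi> q * complex_of_real (Sk k q) * exp (\<i> * complex_of_real ((q - k) * R)) - \<psi> q * complex_of_real (Sk k q)) \<partial>lborel)"
    by (simp only: pw)
  also have "\<dots> = 2 * ((\<integral>q. \<psi> q * complex_of_real (Sk k q) * exp (\<i> * complex_of_real ((q - k) * R)) \<partial>lborel)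
        - (\<integral>q. \<psi> q * complex_of_real (Sk k q) \<partial>lborel))"
    using iS iSe by (simp add: Bochner_Integration.integral_diff)
  finally have F: "Ut 1 (trunc_fourier (-1) (Proj hm) R) k - Ut (-1) (trunc_fourier (-1) (Proj hp) R) k
      = c' * (2 * ((\<integral>q. \<psi> q * complex_of_real (Sk k q) * exp (\<i> * complex_of_real ((q - k) * R)) \<partial>lborel)
        - (\<integral>q. \<psi> q * complex_of_real (Sk k q) \<partial>lborel)))" .
  have c2: "c' * 2 = complex_of_real (1 / pi)" by (simp add: c'_def)
  show ?thesis unfolding F mult.assoc[symmetric] c2 ..
qed

lemma si_Proj: "square_integrable f \<Longrightarrow> square_integrable (Proj f)"
  unfolding square_integrable_def
proof (elim conjE, intro conjI)
  assume m: "f \<in> borel_measurable lborel" and i: "integrable lborel (\<lambda>x. (cmod (f x))\<^sup>2)"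
  have [measurable]: "f \<in> borel_measurable borel" using m by simp
  show "Proj f \<in> borel_measurable lborel" unfolding Proj_def by measurable
  show "integrable lborel (\<lambda>x. (cmod (Proj f x))\<^sup>2)"
  proof (rule Bochner_Integration.integrable_bound[OF i])
    show "(\<lambda>x. (cmod (Proj f x))\<^sup>2) \<in> borel_measurable lborel" unfolding Proj_def by measurable
  qed (auto simp: Proj_def)
qed

lemma rel_exists:
  assumes "square_integrable f" "s = 1 \<or> s = -1"
  shows "fourier_rel s f (SOME g. fourier_rel s f g)"
  using plancherel_exists[OF assms] by (rule someI_ex)

lemma iFT_rel: "square_integrable f \<Longrightarrow> fourier_rel 1 f (iFT f)"
  unfolding iFT_def by (rule rel_exists) auto

lemma FT_rel: "square_integrable f \<Longrightarrow> fourier_rel (-1) f (FT f)"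
  unfolding FT_def by (rule rel_exists) auto

lemma rel_si: "fourier_rel s f g \<Longrightarrow> square_integrable g"
  by (simp add: fourier_rel_def)

lemma rel_lim: "fourier_rel s f g \<Longrightarrow>
  ((\<lambda>R. \<integral>\<^sup>+k. ennreal ((cmod (trunc_fourier s f R k - g k))^2) \<partial>lborel) \<longlongrightarrow> 0) at_top"
  by (simp add: fourier_rel_def)

lemma Ut_diff_sq:
  "ennreal ((cmod (Ut 1 A k - Ut (-1) A' k - (Ut 1 G k - Ut (-1) G' k)))^2)
   \<le> 2 * ennreal ((cmod (A k - G k))^2) + 2 * ennreal ((cmod (A' k - G' k))^2)"
proof -
  have e: "Ut 1 A k - Ut (-1) A' k - (Ut 1 G k - Ut (-1) G' k) =
      exp (- \<i> * complex_of_real (k\<^sup>2 * 1)) * (A k - G k) + (- (exp (- \<i> * complex_of_real (k\<^sup>2 * (-1))) * (A' k - G' k)))"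
    by (simp add: Ut_def algebra_simps)
  have n1: "cmod (exp (- \<i> * complex_of_real (k\<^sup>2 * 1)) * (A k - G k)) = cmod (A k - G k)"
    by (simp add: norm_mult)
  have n2: "cmod (- (exp (- \<i> * complex_of_real (k\<^sup>2 * (-1))) * (A' k - G' k))) = cmod (A' k - G' k)"
    by (simp add: norm_mult)
  show ?thesis unfolding e using sq_tri_ennreal[of "exp (- \<i> * complex_of_real (k\<^sup>2 * 1)) * (A k - G k)"
      "- (exp (- \<i> * complex_of_real (k\<^sup>2 * (-1))) * (A' k - G' k))"]
    by (simp only: n1 n2)
qed


theorem proposition2:
  fixes \<phi> :: "real \<Rightarrow> complex"
  assumes "square_integrable \<phi>"
    and "AE k in lborel. k < 0 \<longrightarrow> \<phi> k = 0"
  shows "AE k in lborel. Kop (eta \<phi>) k = eta (Proj (Bop (Proj \<phi>))) k"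
proof -
  define \<psi> where "\<psi> = Proj \<phi>"
  have psi: "square_integrable \<psi>" unfolding \<psi>_def by (rule si_Proj[OF assms(1)])
  have psi0: "\<psi> q = 0" if "\<not> q > 0" for q using that by (simp add: \<psi>_def Proj_def)
  have eta_psi: "eta \<phi> = \<psi>" by (rule ext) (simp add: eta_def Proj_def \<psi>_def)
  define hm where "hm = iFT (Ut (-1) \<psi>)"
  define hp where "hp = iFT (Ut 1 \<psi>)"
  have relm: "fourier_rel 1 (Ut (-1) \<psi>) hm" unfolding hm_def by (rule iFT_rel[OF si_Ut[OF psi]])
  have relp: "fourier_rel 1 (Ut 1 \<psi>) hp" unfolding hp_def by (rule iFT_rel[OF si_Ut[OF psi]])
  have Phm: "square_integrable (Proj hm)" by (rule si_Proj[OF rel_si[OF relm]])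
  have Php: "square_integrable (Proj hp)" by (rule si_Proj[OF rel_si[OF relp]])
  define Gm where "Gm = FT (Proj hm)"
  define Gp where "Gp = FT (Proj hp)"
  have relGm: "fourier_rel (-1) (Proj hm) Gm" unfolding Gm_def by (rule FT_rel[OF Phm])
  have relGp: "fourier_rel (-1) (Proj hp) Gp" unfolding Gp_def by (rule FT_rel[OF Php])
  have Gmm[measurable]: "Gm \<in> borel_measurable borel" using si_meas[OF rel_si[OF relGm]] by simp
  have Gpm[measurable]: "Gp \<in> borel_measurable borel" using si_meas[OF rel_si[OF relGp]] by simp
  define B where "B k = Bop \<psi> k" for k
  have B_eq: "B k = Ut 1 Gm k - Ut (-1) Gp k" for k
    by (simp add: B_def Bop_def Pitilde_def Gm_def Gp_def hm_def hp_def)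
  define Tm where "Tm R = trunc_fourier (-1) (Proj hm) R" for R
  define Tp where "Tp R = trunc_fourier (-1) (Proj hp) R" for R
  have Tmm[measurable]: "Tm R \<in> borel_measurable borel" for R
    using trunc_meas[OF si_meas[OF Phm]] by (simp add: Tm_def)
  have Tpm[measurable]: "Tp R \<in> borel_measurable borel" for R
    using trunc_meas[OF si_meas[OF Php]] by (simp add: Tp_def)
  define D where "D R k = Ut 1 (Tm R) k - Ut (-1) (Tp R) k" for R k
  have Dm[measurable]: "D R \<in> borel_measurable borel" for R
    unfolding D_def Ut_def by measurable
  have Bm[measurable]: "B \<in> borel_measurable borel"
    unfolding B_eq[abs_def] Ut_def by measurable
  have L2: "((\<lambda>R. \<integral>\<^sup>+k. ennreal ((cmod (D R k - B k))^2) \<partial>lborel) \<longlongrightarrow> 0) at_top"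
  proof (rule tendsto_sandwich[OF _ _ tendsto_const])
    show "\<forall>\<^sub>F R in at_top. 0 \<le> (\<integral>\<^sup>+k. ennreal ((cmod (D R k - B k))^2) \<partial>lborel)" by simp
    show "\<forall>\<^sub>F R in at_top. (\<integral>\<^sup>+k. ennreal ((cmod (D R k - B k))^2) \<partial>lborel) \<le>
        2 * (\<integral>\<^sup>+k. ennreal ((cmod (Tm R k - Gm k))^2) \<partial>lborel) + 2 * (\<integral>\<^sup>+k. ennreal ((cmod (Tp R k - Gp k))^2) \<partial>lborel)"
    proof (intro always_eventually allI)
      fix R
      have "(\<integral>\<^sup>+k. ennreal ((cmod (D R k - B k))^2) \<partial>lborel) \<le>
          (\<integral>\<^sup>+k. 2 * ennreal ((cmod (Tm R k - Gm k))^2) + 2 * ennreal ((cmod (Tp R k - Gp k))^2) \<partial>lborel)"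
        unfolding D_def B_eq by (intro nn_integral_mono Ut_diff_sq)
      also have "\<dots> = 2 * (\<integral>\<^sup>+k. ennreal ((cmod (Tm R k - Gm k))^2) \<partial>lborel) + 2 * (\<integral>\<^sup>+k. ennreal ((cmod (Tp R k - Gp k))^2) \<partial>lborel)"
        by (simp add: nn_integral_add nn_integral_cmult)
      finally show "(\<integral>\<^sup>+k. ennreal ((cmod (D R k - B k))^2) \<partial>lborel) \<le>
          2 * (\<integral>\<^sup>+k. ennreal ((cmod (Tm R k - Gm k))^2) \<partial>lborel) + 2 * (\<integral>\<^sup>+k. ennreal ((cmod (Tp R k - Gp k))^2) \<partial>lborel)" .
    qed
    have l1: "((\<lambda>R. \<integral>\<^sup>+k. ennreal ((cmod (Tm R k - Gm k))^2) \<partial>lborel) \<longlongrightarrow> 0) at_top"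
      using rel_lim[OF relGm] by (simp add: Tm_def)
    have l2: "((\<lambda>R. \<integral>\<^sup>+k. ennreal ((cmod (Tp R k - Gp k))^2) \<partial>lborel) \<longlongrightarrow> 0) at_top"
      using rel_lim[OF relGp] by (simp add: Tp_def)
    have "((\<lambda>R. 2 * (\<integral>\<^sup>+k. ennreal ((cmod (Tm R k - Gm k))^2) \<partial>lborel) + 2 * (\<integral>\<^sup>+k. ennreal ((cmod (Tp R k - Gp k))^2) \<partial>lborel))
        \<longlongrightarrow> 2 * 0 + 2 * 0) at_top"
      by (intro tendsto_add ennreal_tendsto_cmult l1 l2) simp_all
    then show "((\<lambda>R. 2 * (\<integral>\<^sup>+k. ennreal ((cmod (Tm R k - Gm k))^2) \<partial>lborel) + 2 * (\<integral>\<^sup>+k. ennreal ((cmod (Tp R k - Gp k))^2) \<partial>lborel))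
        \<longlongrightarrow> 0) at_top" by simp
  qed
  have Kform: "Kop (eta \<phi>) k = - complex_of_real (1 / pi) * (\<integral>q. \<psi> q * complex_of_real (Sk k q) \<partial>lborel)"
    if k: "k > 0" for k
  proof -
    have "set_lebesgue_integral lborel {0<..} (\<lambda>q. complex_of_real (sin (k\<^sup>2 - q\<^sup>2) / (k - q)) * \<psi> q)
        = (\<integral>q. \<psi> q * complex_of_real (Sk k q) \<partial>lborel)"
      unfolding set_lebesgue_integral_def
      by (intro Bochner_Integration.integral_cong) (auto simp: indicator_def Sk_def psi0)
    then show ?thesis using k by (simp add: Kop_def eta_psi)
  qed
  have ptw: "(\<lambda>n. D (real n * pi) k) \<longlonglongrightarrow> Kop (eta \<phi>) k" if k: "k > 0" for k
  proof -
    define W where "W q = \<psi> q * complex_of_real (Sk k q)" for q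
    have W1: "integrable lborel W" unfolding W_def by (rule si_mult[OF psi Sk_si])
    have W2: "square_integrable W"
      unfolding square_integrable_def
    proof
      have [measurable]: "\<psi> \<in> borel_measurable borel" using si_meas[OF psi] by simp
      show Wm: "W \<in> borel_measurable lborel" unfolding W_def Sk_def by measurable
      show "integrable lborel (\<lambda>x. (cmod (W x))^2)"
      proof (rule Bochner_Integration.integrable_bound[of _ "\<lambda>x. (2 * \<bar>k\<bar> + 1)^2 * (cmod (\<psi> x))^2"])
        show "integrable lborel (\<lambda>x. (2 * \<bar>k\<bar> + 1)^2 * (cmod (\<psi> x))^2)"
          using si_int[OF psi] by simp
        show "(\<lambda>x. (cmod (W x))^2) \<in> borel_measurable lborel" using Wm by measurable
        show "AE x in lborel. norm ((cmod (W x))^2) \<le> norm ((2 * \<bar>k\<bar> + 1)^2 * (cmod (\<psi> x))^2)"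
        proof (intro AE_I2)
          fix x
          have "(cmod (W x))^2 = (Sk k x)^2 * (cmod (\<psi> x))^2"
            by (simp add: W_def norm_mult power_mult_distrib)
          also have "\<dots> \<le> (2 * \<bar>k\<bar> + 1)^2 * (cmod (\<psi> x))^2"
          proof (rule mult_right_mono)
            show "(Sk k x)^2 \<le> (2 * \<bar>k\<bar> + 1)^2"
              using Sk_bdd[of k x] by (metis abs_ge_zero power2_abs power_mono)
          qed simp
          finally show "norm ((cmod (W x))^2) \<le> norm ((2 * \<bar>k\<bar> + 1)^2 * (cmod (\<psi> x))^2)" by simp
        qed
      qed
    qed
    define I where "I n = (\<integral>q. W q * exp (\<i> * complex_of_real ((real n * pi) * q)) \<partial>lborel)" for n :: nat
    have I0: "I \<longlonglongrightarrow> 0" unfolding I_def by (rule RL_lattice[OF W2 W1])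
    have Deq: "D (real n * pi) k = Kop (eta \<phi>) k + complex_of_real (1 / pi) * (exp (- (\<i> * complex_of_real (k * (real n * pi)))) * I n)" for n
    proof -
      have "D (real n * pi) k = complex_of_real (1 / pi) * ((\<integral>q. W q * exp (\<i> * complex_of_real ((q - k) * (real n * pi))) \<partial>lborel)
          - (\<integral>q. W q \<partial>lborel))"
        unfolding D_def Tm_def Tp_def W_def by (rule D_formula[OF psi _ relm relp]) simp
      also have "(\<integral>q. W q * exp (\<i> * complex_of_real ((q - k) * (real n * pi))) \<partial>lborel) =
          exp (- (\<i> * complex_of_real (k * (real n * pi)))) * I n"
      proof -
        have "(\<integral>q. W q * exp (\<i> * complex_of_real ((q - k) * (real n * pi))) \<partial>lborel) =
            (\<integral>q. exp (- (\<i> * complex_of_real (k * (real n * pi)))) * (W q * exp (\<i> * complex_of_real ((real n * pi) * q))) \<partial>lborel)"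
          by (intro Bochner_Integration.integral_cong) (auto simp: mult_exp_exp algebra_simps)
        also have "\<dots> = exp (- (\<i> * complex_of_real (k * (real n * pi)))) * I n"
          unfolding I_def by (rule integral_mult_right_zero)
        finally show ?thesis .
      qed
      finally show ?thesis using Kform[OF k] by (simp add: W_def algebra_simps)
    qed
    have "(\<lambda>n. norm (exp (- (\<i> * complex_of_real (k * (real n * pi)))) * I n)) \<longlonglongrightarrow> 0"
      using tendsto_norm_zero[OF I0] by (simp add: norm_mult)
    then have "(\<lambda>n. exp (- (\<i> * complex_of_real (k * (real n * pi)))) * I n) \<longlonglongrightarrow> 0"
      by (rule tendsto_norm_zero_cancel)
    then have "(\<lambda>n. Kop (eta \<phi>) k + complex_of_real (1 / pi) * (exp (- (\<i> * complex_of_real (k * (real n * pi)))) * I n))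
        \<longlonglongrightarrow> Kop (eta \<phi>) k + complex_of_real (1 / pi) * 0"
      by (intro tendsto_intros)
    then show ?thesis by (simp add: Deq)
  qed
  define F where "F n k = ennreal ((cmod (D (real n * pi) k - B k))^2) * indicator {0<..} k" for n k
  have Fm[measurable]: "F n \<in> borel_measurable borel" for n unfolding F_def by measurable
  have seq: "filterlim (\<lambda>n::nat. real n * pi) at_top sequentially"
    by (rule filterlim_at_top_mult_tendsto_pos[OF tendsto_const pi_gt_zero filterlim_real_sequentially])
  have intF: "(\<lambda>n. \<integral>\<^sup>+k. F n k \<partial>lborel) \<longlonglongrightarrow> 0"
  proof (rule tendsto_sandwich[OF _ _ tendsto_const])
    show "\<forall>\<^sub>F n in sequentially. 0 \<le> (\<integral>\<^sup>+k. F n k \<partial>lborel)" by simp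
    show "\<forall>\<^sub>F n in sequentially. (\<integral>\<^sup>+k. F n k \<partial>lborel) \<le> (\<integral>\<^sup>+k. ennreal ((cmod (D (real n * pi) k - B k))^2) \<partial>lborel)"
      by (intro always_eventually allI nn_integral_mono) (auto simp: F_def indicator_def)
    show "(\<lambda>n. \<integral>\<^sup>+k. ennreal ((cmod (D (real n * pi) k - B k))^2) \<partial>lborel) \<longlonglongrightarrow> 0"
      by (rule filterlim_compose[OF L2 seq])
  qed
  have "(\<integral>\<^sup>+k. liminf (\<lambda>n. F n k) \<partial>lborel) \<le> liminf (\<lambda>n. \<integral>\<^sup>+k. F n k \<partial>lborel)"
    by (rule nn_integral_liminf) simp
  also have "\<dots> = 0" using lim_imp_Liminf[OF _ intF] by simp
  finally have "(\<integral>\<^sup>+k. liminf (\<lambda>n. F n k) \<partial>lborel) = 0" by simp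
  then have AE0: "AE k in lborel. liminf (\<lambda>n. F n k) = 0"
    by (subst nn_integral_0_iff_AE[symmetric]) measurable
  show ?thesis
    using AE0
  proof eventually_elim
    case (elim k)
    show ?case
    proof (cases "k > 0")
      case True
      have "(\<lambda>n. F n k) \<longlonglongrightarrow> ennreal ((cmod (Kop (eta \<phi>) k - B k))^2)"
        unfolding F_def using True by (simp add: indicator_def) (intro tendsto_ennrealI tendsto_intros ptw[OF True])
      then have "liminf (\<lambda>n. F n k) = ennreal ((cmod (Kop (eta \<phi>) k - B k))^2)"
        by (rule lim_imp_Liminf[rotated]) simp
      then have "(cmod (Kop (eta \<phi>) k - B k))^2 = 0" using elim by simp
      then have "Kop (eta \<phi>) k = B k" by simp
      then show ?thesis using True by (simp add: eta_def Proj_def B_def \<psi>_def)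
    next
      case False
      then show ?thesis by (simp add: Kop_def eta_def)
    qed
  qed
qed

end
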